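(* Let $a=a_0+\underline a$ and $b=b_0+\underline b$ be paravectors in $\mathrm{Cl}_{0,7}$, and write $e=e_{1234567}$. Then \begin{align*} 16[abI]_0&=a_0b_0-\underline a\cdot\underline b,\\ 16[abI]_1&=a_0\underline b+\underline ab_0-[(\underline a\wedge\underline b)W]_1,\\ 16[abI]_2&=\underline a\wedge\underline b-[(a_0\underline b+\underline ab_0)W]_2+[(\underline a\wedge\underline b)We]_2,\\ 16[abI]_3&=-(a_0b_0-\underline a\cdot\underline b)W+[(a_0\underline b+\underline ab_0)We]_3-[(\underline a\wedge\underline b)W]_3,\\ 16[abI]_4&=(a_0b_0-\underline a\cdot\underline b)We-[(a_0\underline b+\underline ab_0)W]_4+[(\underline a\wedge\underline b)We]_4,\\ 16[abI]_5&=[(a_0\underline b+\underline ab_0)We]_5-[(\underline a\wedge\underline b)W]_5-(\underline a\wedge\underline b)e,\\ 16[abI]_6&=-(a_0\underline b+\underline ab_0)e+[(\underline a\wedge\underline b)We]_6,\\ 16[abI]_7&=-(a_0b_0-\underline a\cdot\underline b)e, \end{align*} and $[abI]_k=0\iff[abI]_{7-k}=0$ for $k=0,1,\dots,7$. Moreover, if $[abI]_0=0$, then the conditions $[abI]_j=0$, $j=2,3,4,5$, are pairwise equivalent. In particular, if $[abI]_0=[abI]_1=[abI]_2=0$, then $abI=0$.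
   Context: $\mathrm{Cl}_{0,7}$ is the real associative Clifford algebra generated by $e_1,\dots,e_7$ with $e_ie_j+e_je_i=-2\delta_{ij}$; $e_{i_1\cdots i_k}=e_{i_1}\cdots e_{i_k}$; $[c]_k$ denotes the grade-$k$ part of $c\in\mathrm{Cl}_{0,7}$. Paravectors are elements $x_0+\underline x$ with $\underline x=\sum_{i=1}^7x_ie_i$. For vectors: $\underline a\cdot\underline b=\sum_ia_ib_i$ and $\underline a\wedge\underline b=\sum_{1\le i\ne j\le7}a_ib_je_ie_j$. $W=e_{123}+e_{145}+e_{176}+e_{246}+e_{257}+e_{347}+e_{365}$, and $I=I^-=\frac1{16}(1+We_{1234567})(1-e_{1234567})$. *)

theory Defs
  imports "HOL-Analysis.Analysis" "HOL-Library.Function_Algebras"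
begin

text \<open>Elements of Cl_{0,7} are represented by their coordinates with respect to the
basis blades e_A, A a subset of {1..7} (A = {} is the scalar 1).\<close>

type_synonym mv = "nat set \<Rightarrow> real"

definition blade_sign :: "nat set \<Rightarrow> nat set \<Rightarrow> real" where
  "blade_sign A B = (-1) ^ card {(a, b). a \<in> A \<and> b \<in> B \<and> b < a} * (-1) ^ card (A \<inter> B)"

definition cl_mult :: "mv \<Rightarrow> mv \<Rightarrow> mv" (infixl "\<odot>" 70) where
  "x \<odot> y = (\<lambda>C. \<Sum>A\<in>Pow {1..7}. \<Sum>B\<in>Pow {1..7}.
       if (A - B) \<union> (B - A) = C then blade_sign A B * x A * y B else 0)"

definition sc :: "real \<Rightarrow> mv \<Rightarrow> mv" where
  "sc c x = (\<lambda>A. c * x A)"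

definition scal :: "real \<Rightarrow> mv" where
  "scal c = (\<lambda>A. if A = {} then c else 0)"

definition gen :: "nat \<Rightarrow> mv" where
  "gen i = (\<lambda>A. if A = {i} then 1 else 0)"

definition eprod :: "nat list \<Rightarrow> mv" where
  "eprod is = foldr (\<lambda>i acc. gen i \<odot> acc) is (scal 1)"

definition grade :: "nat \<Rightarrow> mv \<Rightarrow> mv" where
  "grade k x = (\<lambda>A. if card A = k then x A else 0)"

definition vec :: "(nat \<Rightarrow> real) \<Rightarrow> mv" where
  "vec a = (\<Sum>i\<in>{1..7}. sc (a i) (gen i))"

definition para :: "real \<Rightarrow> (nat \<Rightarrow> real) \<Rightarrow> mv" where
  "para a0 a = scal a0 + vec a"

definition dotv :: "(nat \<Rightarrow> real) \<Rightarrow> (nat \<Rightarrow> real) \<Rightarrow> real" where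
  "dotv a b = (\<Sum>i\<in>{1..7}. a i * b i)"

definition wedgev :: "(nat \<Rightarrow> real) \<Rightarrow> (nat \<Rightarrow> real) \<Rightarrow> mv" where
  "wedgev a b = (\<Sum>i\<in>{1..7}. \<Sum>j\<in>{1..7}. if i \<noteq> j then sc (a i * b j) (gen i \<odot> gen j) else 0)"

definition Wc :: mv where
  "Wc = eprod [1,2,3] + eprod [1,4,5] + eprod [1,7,6] + eprod [2,4,6]
      + eprod [2,5,7] + eprod [3,4,7] + eprod [3,6,5]"

definition e7 :: mv where
  "e7 = eprod [1,2,3,4,5,6,7]"

definition Iminus :: mv where
  "Iminus = sc (1/16) ((scal 1 + Wc \<odot> e7) \<odot> (scal 1 - e7))"

end

theory Submission
  imports Defs
begin

fun bset :: "bool list \<Rightarrow> nat set" where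
  "bset [] = {}"
| "bset (x#xs) = (if x then insert 1 (Suc ` bset xs) else Suc ` bset xs)"

lemma bset_ge1: "i \<in> bset xs \<Longrightarrow> 1 \<le> i"
  by (induction xs) (auto split: if_splits)

lemma bset_sub: "bset xs \<subseteq> {1..length xs}"
  by (induction xs) (auto split: if_splits)

lemma finite_bset[simp]: "finite (bset xs)"
  by (induction xs) auto

lemma bset_inj: "length xs = length ys \<Longrightarrow> bset xs = bset ys \<Longrightarrow> xs = ys"
proof (induction xs arbitrary: ys)
  case Nil then show ?case by simp
next
  case (Cons x xs)
  then obtain y ys' where ys: "ys = y # ys'" by (cases ys) auto
  have n1: "1 \<notin> Suc ` bset zs" for zs using bset_ge1[of _ zs] by auto
  have xy: "x = y" using Cons.prems ys n1[of xs] n1[of ys'] by (auto split: if_splits)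
  have "Suc ` bset xs = Suc ` bset ys'"
  proof -
    have "Suc ` bset xs = bset (x#xs) - {1}" using n1[of xs] by auto
    also have "\<dots> = bset (y#ys') - {1}" using Cons.prems ys by simp
    also have "\<dots> = Suc ` bset ys'" using n1[of ys'] by auto
    finally show ?thesis .
  qed
  then have "bset xs = bset ys'" by (simp add: inj_image_eq_iff)
  then show ?case using Cons ys xy by auto
qed

fun xorl :: "bool list \<Rightarrow> bool list \<Rightarrow> bool list" where
  "xorl (a#as) (b#bs) = (a \<noteq> b) # xorl as bs"
| "xorl _ _ = []"

lemma length_xorl[simp]: "length (xorl xs ys) = min (length xs) (length ys)"
  by (induction xs ys rule: xorl.induct) auto

lemma bset_xorl: "length xs = length ys \<Longrightarrow>
   (bset xs - bset ys) \<union> (bset ys - bset xs) = bset (xorl xs ys)"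
proof (induction xs ys rule: xorl.induct)
  case (1 a as b bs)
  have n1: "1 \<notin> Suc ` bset zs" for zs using bset_ge1[of _ zs] by auto
  have "(Suc ` bset as - Suc ` bset bs) \<union> (Suc ` bset bs - Suc ` bset as)
        = Suc ` ((bset as - bset bs) \<union> (bset bs - bset as))" by auto
  then show ?case using 1 n1[of as] n1[of bs] by (auto split: if_splits)
qed auto

lemma card_bset: "card (bset xs) = length (filter id xs)"
proof (induction xs)
  case (Cons x xs)
  have n1: "1 \<notin> Suc ` bset xs" using bset_ge1[of _ xs] by auto
  have "card (Suc ` bset xs) = card (bset xs)" by (simp add: card_image)
  then show ?case using Cons n1 by auto
qed simp

fun par :: "bool list \<Rightarrow> bool list \<Rightarrow> bool" where
  "par (a#as) (b#bs) = ((b \<and> odd (length (filter id as))) \<noteq> ((a \<and> b) \<noteq> par as bs))"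
| "par _ _ = False"

definition npairs :: "nat set \<Rightarrow> nat set \<Rightarrow> nat" where
  "npairs A B = card {(a, b). a \<in> A \<and> b \<in> B \<and> b < a}"

lemma npairs_cons:
  "npairs (bset (x#xs)) (bset (y#ys)) = (if y then card (bset xs) else 0) + npairs (bset xs) (bset ys)"
proof -
  let ?A = "bset xs" and ?B = "bset ys"
  let ?P = "\<lambda>A B. {(a, b). a \<in> A \<and> b \<in> B \<and> b < a}"
  have fin: "finite (?P A B)" if "finite A" "finite B" for A B :: "nat set"
    by (rule finite_subset[of _ "A \<times> B"]) (use that in auto)
  have eq: "?P (bset (x#xs)) (bset (y#ys)) =
      (if y then (\<lambda>a. (Suc a, 1)) ` ?A else {}) \<union> map_prod Suc Suc ` ?P ?A ?B"
    using bset_ge1[of _ xs] bset_ge1[of _ ys]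
    apply (auto split: if_splits simp: image_iff)
    apply force+
    done
  have disj: "(if y then (\<lambda>a. (Suc a, 1::nat)) ` ?A else {}) \<inter> map_prod Suc Suc ` ?P ?A ?B = {}"
    using bset_ge1[of _ ys] by auto
  have c1: "card ((\<lambda>a. (Suc a, 1::nat)) ` ?A) = card ?A"
    by (rule card_image) (auto simp: inj_on_def)
  have c2: "card (map_prod Suc Suc ` ?P ?A ?B) = card (?P ?A ?B)"
    by (rule card_image) (auto simp: inj_on_def)
  show ?thesis unfolding npairs_def eq
    apply (subst card_Un_disjoint)
    using disj fin[of ?A ?B] c1 c2 by auto
qed

lemma card_int_cons:
  "card (bset (x#xs) \<inter> bset (y#ys)) = (if x \<and> y then 1 else 0) + card (bset xs \<inter> bset ys)"
proof -
  have n1: "1 \<notin> Suc ` bset zs" for zs using bset_ge1[of _ zs] by auto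
  have "Suc ` bset xs \<inter> Suc ` bset ys = Suc ` (bset xs \<inter> bset ys)" by auto
  moreover have "card (Suc ` (bset xs \<inter> bset ys)) = card (bset xs \<inter> bset ys)" by (simp add: card_image)
  moreover have "1 \<notin> Suc ` (bset xs \<inter> bset ys)" using bset_ge1[of _ xs] by auto
  ultimately show ?thesis using n1[of xs] n1[of ys] by (auto simp: Int_insert_left Int_insert_right)
qed

lemma par_odd: "length xs = length ys \<Longrightarrow>
   par xs ys = odd (npairs (bset xs) (bset ys) + card (bset xs \<inter> bset ys))"
proof (induction xs ys rule: par.induct)
  case (1 a as b bs)
  have e1: "npairs (bset (a#as)) (bset (b#bs)) = (if b then card (bset as) else 0) + npairs (bset as) (bset bs)"
    by (rule npairs_cons)
  have e2: "card (bset (a#as) \<inter> bset (b#bs)) = (if a \<and> b then 1 else 0) + card (bset as \<inter> bset bs)"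
    by (rule card_int_cons)
  show ?case using 1 unfolding e1 e2 apply (simp add: card_bset del: bset.simps) by blast
qed (auto simp: npairs_def)

lemma blade_sign_par: "length xs = length ys \<Longrightarrow>
   blade_sign (bset xs) (bset ys) = (if par xs ys then -1 else 1)"
  unfolding blade_sign_def using par_odd[of xs ys]
  by (simp add: npairs_def power_add[symmetric])


definition bl :: "nat set \<Rightarrow> mv" where "bl A = (\<lambda>C. if C = A then 1 else 0)"

lemma bl_mult:
  assumes "A \<subseteq> {1..7}" "B \<subseteq> {1..7}"
  shows "bl A \<odot> bl B = sc (blade_sign A B) (bl ((A - B) \<union> (B - A)))"
proof (rule ext)
  fix C
  have "\<And>A' B'. (if (A' - B') \<union> (B' - A') = C then blade_sign A' B' * bl A A' * bl B B' else 0)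
     = (if B' = B then (if A' = A then (if (A - B) \<union> (B - A) = C then blade_sign A B else 0) else 0) else 0)"
    by (auto simp: bl_def)
  then have "(bl A \<odot> bl B) C = (\<Sum>A'\<in>Pow {1..7}. \<Sum>B'\<in>Pow {1..7}. (if B' = B then (if A' = A then (if (A - B) \<union> (B - A) = C then blade_sign A B else 0) else 0) else 0))"
    unfolding cl_mult_def by simp
  also have "\<dots> = (if (A - B) \<union> (B - A) = C then blade_sign A B else 0)"
    using assms by (simp add: sum.delta)
  finally show "(bl A \<odot> bl B) C = sc (blade_sign A B) (bl ((A - B) \<union> (B - A))) C"
    by (simp add: sc_def bl_def)
qed

lemma mult_add_left: "(x + y) \<odot> z = x \<odot> z + y \<odot> z"
  unfolding cl_mult_def by (rule ext) (simp add: sum.distrib[symmetric] algebra_simps if_distrib cong: if_cong)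

lemma mult_add_right: "z \<odot> (x + y) = z \<odot> x + z \<odot> y"
  unfolding cl_mult_def by (rule ext) (simp add: sum.distrib[symmetric] algebra_simps if_distrib cong: if_cong)

lemma mult_sc_left: "sc c x \<odot> y = sc c (x \<odot> y)"
  unfolding cl_mult_def sc_def by (rule ext) (simp add: sum_distrib_left algebra_simps if_distrib cong: if_cong)

lemma mult_sc_right: "y \<odot> sc c x = sc c (y \<odot> x)"
  unfolding cl_mult_def sc_def by (rule ext) (simp add: sum_distrib_left algebra_simps if_distrib cong: if_cong)

lemma mult_zero_left: "0 \<odot> y = 0"
proof -
  have "0 \<odot> y = 0 \<odot> y + 0 \<odot> y" using mult_add_left[of 0 0 y] by simp
  then show ?thesis by simp
qed

lemma mult_zero_right: "y \<odot> 0 = 0"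
proof -
  have "y \<odot> 0 = y \<odot> 0 + y \<odot> 0" using mult_add_right[of y 0 0] by simp
  then show ?thesis by simp
qed

definition lc :: "(bool list \<times> real) list \<Rightarrow> mv" where
  "lc xs = sum_list (map (\<lambda>(m, c). sc c (bl (bset m))) xs)"

lemma lc_Nil: "lc [] = 0" by (simp add: lc_def)
lemma lc_Cons: "lc ((m, c) # xs) = sc c (bl (bset m)) + lc xs" by (simp add: lc_def)
lemma lc_Cons': "lc (p # xs) = sc (snd p) (bl (bset (fst p))) + lc xs" by (cases p) (simp add: lc_def)
lemma lc_append: "lc (xs @ ys) = lc xs + lc ys" by (simp add: lc_def)

lemma lc_apply: "lc xs C = sum_list (map snd (filter (\<lambda>p. bset (fst p) = C) xs))"
  by (induction xs) (auto simp: lc_Nil lc_Cons' sc_def bl_def zero_fun_apply)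

lemma mult_zero_left': "(\<lambda>a. 0) \<odot> y = (\<lambda>a. 0)"
  using mult_zero_left by (simp add: zero_fun_def)
lemma mult_zero_right': "y \<odot> (\<lambda>a. 0) = (\<lambda>a. 0)"
  using mult_zero_right by (simp add: zero_fun_def)

lemma lc_sc: "sc c (lc xs) = lc (map (\<lambda>(m, d). (m, c * d)) xs)"
  by (rule ext) (induction xs, auto simp: lc_apply sc_def algebra_simps)

lemma lc_uminus: "- lc xs = lc (map (\<lambda>(m, d). (m, - d)) xs)"
  by (rule ext) (induction xs, auto simp: lc_apply)

lemma lc_minus: "lc xs - lc ys = lc (xs @ map (\<lambda>(m, d). (m, - d)) ys)"
  by (simp add: lc_append lc_uminus[symmetric])

definition ok :: "nat \<Rightarrow> (bool list \<times> real) list \<Rightarrow> bool" where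
  "ok k xs = list_all (\<lambda>p. length (fst p) = k) xs"

lemma ok_simps[simp]: "ok k [] = True" "ok k (p # xs) = (length (fst p) = k \<and> ok k xs)"
  by (auto simp: ok_def)

fun pr1 :: "bool list \<Rightarrow> real \<Rightarrow> (bool list \<times> real) list \<Rightarrow> (bool list \<times> real) list" where
  "pr1 m c [] = []"
| "pr1 m c ((n, d) # ys) = (xorl m n, (if par m n then - (c * d) else c * d)) # pr1 m c ys"

fun pr :: "(bool list \<times> real) list \<Rightarrow> (bool list \<times> real) list \<Rightarrow> (bool list \<times> real) list" where
  "pr [] ys = []"
| "pr ((m, c) # xs) ys = pr1 m c ys @ pr xs ys"

lemma bl_bset_mult:
  assumes "length m = 7" "length n = 7"
  shows "bl (bset m) \<odot> bl (bset n) = sc (if par m n then -1 else 1) (bl (bset (xorl m n)))"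
proof -
  have "bset m \<subseteq> {1..7}" "bset n \<subseteq> {1..7}" using bset_sub[of m] bset_sub[of n] assms by auto
  then show ?thesis using bl_mult blade_sign_par bset_xorl assms by simp
qed

lemma sc_sc: "sc c (sc d x) = sc (c * d) x" by (simp add: sc_def algebra_simps)

lemma lc_pr1: "length m = 7 \<Longrightarrow> ok 7 ys \<Longrightarrow> sc c (bl (bset m)) \<odot> lc ys = lc (pr1 m c ys)"
proof (induction ys)
  case Nil then show ?case by (simp add: lc_Nil mult_zero_right mult_zero_right')
next
  case (Cons p ys)
  obtain n d where p: "p = (n, d)" by (cases p)
  have "sc c (bl (bset m)) \<odot> lc (p # ys) = sc (c * d) (bl (bset m) \<odot> bl (bset n)) + sc c (bl (bset m)) \<odot> lc ys"
    by (simp only: p lc_Cons mult_add_right mult_sc_left mult_sc_right sc_sc mult.commute[of d c])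
  also have "\<dots> = sc (if par m n then - (c * d) else c * d) (bl (bset (xorl m n))) + lc (pr1 m c ys)"
    using Cons p by (simp add: bl_bset_mult sc_sc)
  also have "\<dots> = lc (pr1 m c (p # ys))" by (simp only: p pr1.simps lc_Cons)
  finally show ?case .
qed

lemma lc_mult: "ok 7 xs \<Longrightarrow> ok 7 ys \<Longrightarrow> lc xs \<odot> lc ys = lc (pr xs ys)"
proof (induction xs)
  case Nil then show ?case by (simp add: lc_Nil mult_zero_left mult_zero_left')
next
  case (Cons p xs)
  obtain m c where p: "p = (m, c)" by (cases p)
  have "lc (p # xs) \<odot> lc ys = sc c (bl (bset m)) \<odot> lc ys + lc xs \<odot> lc ys"
    by (simp only: p lc_Cons mult_add_left)
  also have "\<dots> = lc (pr1 m c ys) + lc (pr xs ys)" using Cons p lc_pr1[of m ys c] by simp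
  also have "\<dots> = lc (pr (p # xs) ys)" by (simp only: p pr.simps lc_append)
  finally show ?case .
qed

fun nrm :: "nat \<Rightarrow> (bool list \<times> real) list \<Rightarrow> (bool list \<times> real) list" where
  "nrm 0 xs = [([], sum_list (map snd xs))]"
| "nrm (Suc k) xs =
     map (\<lambda>p. (False # fst p, snd p)) (nrm k (map (\<lambda>p. (tl (fst p), snd p)) (filter (\<lambda>p. \<not> hd (fst p)) xs)))
   @ map (\<lambda>p. (True # fst p, snd p)) (nrm k (map (\<lambda>p. (tl (fst p), snd p)) (filter (\<lambda>p. hd (fst p)) xs)))"

definition cf :: "(bool list \<times> real) list \<Rightarrow> bool list \<Rightarrow> real" where
  "cf xs m = sum_list (map snd (filter (\<lambda>p. fst p = m) xs))"

lemma cf_append: "cf (xs @ ys) m = cf xs m + cf ys m" by (simp add: cf_def)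

lemma cf_map_cons: "cf (map (\<lambda>p. (c # fst p, snd p)) L) (b # m) = (if c = b then cf L m else 0)"
  by (induction L) (auto simp: cf_def)

lemma cf_tl: "ok (Suc k) xs \<Longrightarrow>
   cf (map (\<lambda>p. (tl (fst p), snd p)) (filter (\<lambda>p. hd (fst p) = b) xs)) m = cf xs (b # m)"
proof (induction xs)
  case (Cons p xs)
  obtain q c where p: "p = (q, c)" by (cases p)
  obtain b' q' where q: "q = b' # q'" using Cons.prems p by (cases q) auto
  show ?case using Cons p q by (auto simp: cf_def)
qed (simp add: cf_def)

lemma length_nrm: "p \<in> set (nrm k xs) \<Longrightarrow> length (fst p) = k"
  by (induction k arbitrary: xs p) auto

lemma cf_nrm: "ok k xs \<Longrightarrow> length m = k \<Longrightarrow> cf (nrm k xs) m = cf xs m"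
proof (induction k arbitrary: xs m)
  case 0
  then have "filter (\<lambda>p. fst p = m) xs = xs" by (auto simp: ok_def list_all_iff intro: filter_True)
  then show ?case using 0 by (simp add: cf_def)
next
  case (Suc k)
  obtain b m' where m: "m = b # m'" using Suc.prems by (cases m) auto
  have ok1: "ok k (map (\<lambda>p. (tl (fst p), snd p)) (filter P xs))" for P
    using Suc.prems(1) by (auto simp: ok_def list_all_iff)
  have h1: "cf (map (\<lambda>p. (tl (fst p), snd p)) (filter (\<lambda>p. \<not> hd (fst p)) xs)) m' = cf xs (False # m')"
    using cf_tl[OF Suc.prems(1), of False m'] by simp
  have h2: "cf (map (\<lambda>p. (tl (fst p), snd p)) (filter (\<lambda>p. hd (fst p)) xs)) m' = cf xs (True # m')"
    using cf_tl[OF Suc.prems(1), of True m'] by simp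
  show ?case using Suc.IH[OF ok1] Suc.prems m h1 h2
    by (cases b) (simp_all add: cf_append cf_map_cons)
qed

lemma lc_nrm: assumes "ok k xs" shows "lc (nrm k xs) = lc xs"
proof (rule ext)
  fix C
  show "lc (nrm k xs) C = lc xs C"
  proof (cases "\<exists>m. length m = k \<and> bset m = C")
    case True
    then obtain m where m: "length m = k" "bset m = C" by blast
    have "filter (\<lambda>p. bset (fst p) = C) L = filter (\<lambda>p. fst p = m) L"
      if "\<forall>p\<in>set L. length (fst p) = k" for L :: "(bool list \<times> real) list"
    proof (rule filter_cong[OF refl])
      fix p assume "p \<in> set L"
      then have "length (fst p) = k" using that by blast
      then show "(bset (fst p) = C) = (fst p = m)" using m bset_inj[of "fst p" m] by auto
    qed
    then show ?thesis using assms m length_nrm[of _ k xs] cf_nrm[OF assms m(1)]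
      by (simp add: lc_apply cf_def ok_def list_all_iff)
  next
    case False
    have "filter (\<lambda>p. bset (fst p) = C) L = []"
      if "\<forall>p\<in>set L. length (fst p) = k" for L :: "(bool list \<times> real) list"
      using that False unfolding filter_empty_conv by blast
    then show ?thesis using assms length_nrm[of _ k xs]
      by (simp add: lc_apply ok_def list_all_iff)
  qed
qed

lemma lc_eqI: "ok 7 xs \<Longrightarrow> ok 7 ys \<Longrightarrow> nrm 7 xs = nrm 7 ys \<Longrightarrow> lc xs = lc ys"
  by (metis lc_nrm)

lemma lc_add: "lc xs + lc ys = lc (xs @ ys)" by (simp add: lc_append)

lemma scal_lc: "scal c = lc [([False,False,False,False,False,False,False], c)]"
  by (rule ext) (simp add: scal_def lc_apply)

lemma gen1_lc: "gen 1 = lc [([True,False,False,False,False,False,False], 1)]"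
  by (rule ext) (auto simp: gen_def lc_apply)

lemma gen2_lc: "gen 2 = lc [([False,True,False,False,False,False,False], 1)]"
  by (rule ext) (auto simp: gen_def lc_apply)

lemma gen3_lc: "gen 3 = lc [([False,False,True,False,False,False,False], 1)]"
  by (rule ext) (auto simp: gen_def lc_apply)

lemma gen4_lc: "gen 4 = lc [([False,False,False,True,False,False,False], 1)]"
  by (rule ext) (auto simp: gen_def lc_apply)

lemma gen5_lc: "gen 5 = lc [([False,False,False,False,True,False,False], 1)]"
  by (rule ext) (auto simp: gen_def lc_apply)

lemma gen6_lc: "gen 6 = lc [([False,False,False,False,False,True,False], 1)]"
  by (rule ext) (auto simp: gen_def lc_apply)

lemma gen7_lc: "gen 7 = lc [([False,False,False,False,False,False,True], 1)]"
  by (rule ext) (auto simp: gen_def lc_apply)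

lemma gen1s_lc: "gen (Suc 0) = lc [([True,False,False,False,False,False,False], 1)]"
  using gen1_lc by simp

lemmas gen_lc = gen1s_lc gen1_lc gen2_lc gen3_lc gen4_lc gen5_lc gen6_lc gen7_lc

lemma grade_lc: "grade k (lc xs) = lc (filter (\<lambda>p. length (filter id (fst p)) = k) xs)"
proof (rule ext)
  fix C
  have "filter (\<lambda>p. bset (fst p) = C) (filter (\<lambda>p. length (filter id (fst p)) = k) xs)
      = filter (\<lambda>p. card C = k \<and> bset (fst p) = C) xs"
    unfolding filter_filter by (rule filter_cong) (auto simp: card_bset)
  also have "\<dots> = (if card C = k then filter (\<lambda>p. bset (fst p) = C) xs else [])"
    by auto
  finally have "filter (\<lambda>p. bset (fst p) = C) (filter (\<lambda>p. length (filter id (fst p)) = k) xs)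
      = (if card C = k then filter (\<lambda>p. bset (fst p) = C) xs else [])" .
  then show "grade k (lc xs) C = lc (filter (\<lambda>p. length (filter id (fst p)) = k) xs) C"
    by (simp add: grade_def lc_apply)
qed

lemma sum17: "(\<Sum>i\<in>{1..7::nat}. f i) = f 1 + f 2 + f 3 + f 4 + f 5 + f 6 + f 7"
proof -
  have "{1..7::nat} = {1,2,3,4,5,6,7}" by auto
  then show ?thesis by (simp add: add.assoc)
qed

lemma lc_eqI': "ok 7 xs \<Longrightarrow> ok 7 ys \<Longrightarrow> nrm (Suc (Suc (Suc (Suc (Suc (Suc (Suc 0))))))) xs = nrm (Suc (Suc (Suc (Suc (Suc (Suc (Suc 0))))))) ys \<Longrightarrow> lc xs = lc ys"
proof -
  have "(7::nat) = Suc (Suc (Suc (Suc (Suc (Suc (Suc 0))))))" by simp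
  then show "ok 7 xs \<Longrightarrow> ok 7 ys \<Longrightarrow> nrm (Suc (Suc (Suc (Suc (Suc (Suc (Suc 0))))))) xs = nrm (Suc (Suc (Suc (Suc (Suc (Suc (Suc 0))))))) ys \<Longrightarrow> lc xs = lc ys"
    using lc_eqI by metis
qed

lemmas tolc = scal_lc gen_lc grade_lc lc_add lc_sc lc_uminus lc_minus lc_mult

lemma e7_lc: "e7 = lc [([True,True,True,True,True,True,True], 1)]"
  unfolding e7_def eprod_def
  apply (simp only: foldr.simps comp_apply id_apply scal_lc gen_lc)
  by (simp add: lc_mult)

lemma Wc_lc: "Wc = lc [([True,True,True,False,False,False,False], (1)), ([True,False,False,True,True,False,False], (1)), ([True,False,False,False,False,True,True], (- 1)), ([False,True,False,True,False,True,False], (1)), ([False,True,False,False,True,False,True], (1)), ([False,False,True,True,False,False,True], (1)), ([False,False,True,False,True,True,False], (- 1))]"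
  unfolding Wc_def eprod_def
  by (simp only: foldr.simps comp_apply id_apply scal_lc gen_lc) (simp add: tolc, ((rule lc_eqI'), simp_all)?)

lemma Iminus_lc: "Iminus = lc [([False,False,False,False,False,False,False], (1/16)), ([True,True,True,False,False,False,False], (- 1/16)), ([True,False,False,True,True,False,False], (- 1/16)), ([True,False,False,False,False,True,True], (1/16)), ([False,True,False,True,False,True,False], (- 1/16)), ([False,True,False,False,True,False,True], (- 1/16)), ([False,False,True,True,False,False,True], (- 1/16)), ([False,False,True,False,True,True,False], (1/16)), ([True,True,False,True,False,False,True], (- 1/16)), ([True,True,False,False,True,True,False], (1/16)), ([True,False,True,True,False,True,False], (1/16)), ([True,False,True,False,True,False,True], (1/16)), ([False,True,True,True,True,False,False], (- 1/16)), ([False,True,True,False,False,True,True], (1/16)), ([False,False,False,True,True,True,True], (1/16)), ([True,True,True,True,True,True,True], (- 1/16))]"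
  unfolding Iminus_def
  apply (simp only: Wc_lc e7_lc scal_lc)
  apply (simp add: tolc)
  apply (rule lc_eqI')
  apply simp
  apply simp
  apply simp
  done

lemma vec_lc: "vec a = lc [([True,False,False,False,False,False,False], a 1), ([False,True,False,False,False,False,False], a 2), ([False,False,True,False,False,False,False], a 3), ([False,False,False,True,False,False,False], a 4), ([False,False,False,False,True,False,False], a 5), ([False,False,False,False,False,True,False], a 6), ([False,False,False,False,False,False,True], a 7)]"
  unfolding vec_def sum17
  by (simp add: tolc) ((rule lc_eqI', simp, simp, simp)?)

lemma para_lc: "para a0 a = lc (([False,False,False,False,False,False,False], a0) # [([True,False,False,False,False,False,False], a 1), ([False,True,False,False,False,False,False], a 2), ([False,False,True,False,False,False,False], a 3), ([False,False,False,True,False,False,False], a 4), ([False,False,False,False,True,False,False], a 5), ([False,False,False,False,False,True,False], a 6), ([False,False,False,False,False,False,True], a 7)])"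
  unfolding para_def vec_lc scal_lc by (simp add: lc_add)

lemma dotv_eq: "dotv a b = a 1 * b 1 + a 2 * b 2 + a 3 * b 3 + a 4 * b 4 + a 5 * b 5 + a 6 * b 6 + a 7 * b 7"
  unfolding dotv_def sum17 by simp

lemma wedgev_lc: "wedgev a b = lc [([True,True,False,False,False,False,False], a 1 * b 2 - a 2 * b 1), ([True,False,True,False,False,False,False], a 1 * b 3 - a 3 * b 1), ([True,False,False,True,False,False,False], a 1 * b 4 - a 4 * b 1), ([True,False,False,False,True,False,False], a 1 * b 5 - a 5 * b 1), ([True,False,False,False,False,True,False], a 1 * b 6 - a 6 * b 1), ([True,False,False,False,False,False,True], a 1 * b 7 - a 7 * b 1), ([False,True,True,False,False,False,False], a 2 * b 3 - a 3 * b 2), ([False,True,False,True,False,False,False], a 2 * b 4 - a 4 * b 2), ([False,True,False,False,True,False,False], a 2 * b 5 - a 5 * b 2), ([False,True,False,False,False,True,False], a 2 * b 6 - a 6 * b 2), ([False,True,False,False,False,False,True], a 2 * b 7 - a 7 * b 2), ([False,False,True,True,False,False,False], a 3 * b 4 - a 4 * b 3), ([False,False,True,False,True,False,False], a 3 * b 5 - a 5 * b 3), ([False,False,True,False,False,True,False], a 3 * b 6 - a 6 * b 3), ([False,False,True,False,False,False,True], a 3 * b 7 - a 7 * b 3), ([False,False,False,True,True,False,False], a 4 * b 5 - a 5 * b 4), ([False,False,False,True,False,True,False], a 4 * b 6 - a 6 * b 4), ([False,False,False,True,False,False,True], a 4 * b 7 - a 7 * b 4), ([False,False,False,False,True,True,False],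 a 5 * b 6 - a 6 * b 5), ([False,False,False,False,True,False,True], a 5 * b 7 - a 7 * b 5), ([False,False,False,False,False,True,True], a 6 * b 7 - a 7 * b 6)]"
  unfolding wedgev_def sum17
  by (simp add: tolc) ((rule lc_eqI', simp, simp, simp)?)

datatype tr = Lf real | Nd tr tr

fun twf :: "nat \<Rightarrow> tr \<Rightarrow> bool" where
  "twf 0 (Lf x) = True"
| "twf (Suc k) (Nd a b) = (twf k a \<and> twf k b)"
| "twf _ _ = False"

fun tc :: "tr \<Rightarrow> bool list \<Rightarrow> real" where
  "tc (Lf x) [] = x"
| "tc (Nd a b) (c # m) = (if c then tc b m else tc a m)"
| "tc _ _ = 0"

fun tsc :: "real \<Rightarrow> tr \<Rightarrow> tr" where
  "tsc c (Lf x) = Lf (c * x)"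
| "tsc c (Nd a b) = Nd (tsc c a) (tsc c b)"

fun tadd :: "tr \<Rightarrow> tr \<Rightarrow> tr" where
  "tadd (Lf x) (Lf y) = Lf (x + y)"
| "tadd (Nd a b) (Nd c d) = Nd (tadd a c) (tadd b d)"
| "tadd _ _ = Lf 0"

fun tgr :: "nat \<Rightarrow> tr \<Rightarrow> tr" where
  "tgr k (Lf x) = (if k = 0 then Lf x else Lf 0)"
| "tgr k (Nd a b) = Nd (tgr k a) (if k = 0 then tsc 0 b else tgr (k - 1) b)"

fun tw :: "tr \<Rightarrow> tr" where
  "tw (Lf x) = Lf x"
| "tw (Nd a b) = Nd (tw a) (tsc (-1) (tw b))"

fun lmul :: "bool list \<Rightarrow> tr \<Rightarrow> tr" where
  "lmul [] T = T"
| "lmul (a # as) (Nd T0 T1) =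
    (if a then Nd (if odd (length (filter id as)) then lmul as T1 else tsc (-1) (lmul as T1)) (lmul as T0)
     else Nd (lmul as T0) (if odd (length (filter id as)) then tsc (-1) (lmul as T1) else lmul as T1))"
| "lmul (a # as) (Lf x) = Lf 0"

fun rmul :: "tr \<Rightarrow> bool list \<Rightarrow> tr" where
  "rmul T [] = T"
| "rmul (Nd T0 T1) (b # bs) =
    (if b then Nd (tsc (-1) (rmul (tw T1) bs)) (rmul (tw T0) bs) else Nd (rmul T0 bs) (rmul T1 bs))"
| "rmul (Lf x) (b # bs) = Lf 0"

fun lmulL :: "(bool list \<times> real) list \<Rightarrow> tr \<Rightarrow> tr" where
  "lmulL [] T = tsc 0 T"
| "lmulL ((m, c) # xs) T = tadd (tsc c (lmul m T)) (lmulL xs T)"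

lemma tc_tsc[simp]: "tc (tsc c T) m = c * tc T m"
  by (induction T arbitrary: m; case_tac m) auto

lemma wf_tsc[simp]: "twf k (tsc c T) = twf k T"
  by (induction k T rule: twf.induct) auto

lemma tc_tadd: "twf k A \<Longrightarrow> twf k B \<Longrightarrow> tc (tadd A B) m = tc A m + tc B m"
proof (induction A B arbitrary: k m rule: tadd.induct)
  case (1 x y) then show ?case by (cases m) auto
next
  case (2 a b c d) then show ?case by (cases k; cases m) auto
qed (auto elim: twf.elims)

lemma wf_tadd: "twf k A \<Longrightarrow> twf k B \<Longrightarrow> twf k (tadd A B)"
  by (induction A B arbitrary: k rule: tadd.induct) (auto elim: twf.elims)

lemma tc_tgr: "tc (tgr k T) m = (if length (filter id m) = k then tc T m else 0)"
  by (induction T arbitrary: k m; case_tac m) auto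

lemma wf_tgr: "twf n T \<Longrightarrow> twf n (tgr k T)"
  by (induction n T arbitrary: k rule: twf.induct) auto

lemma tc_tw: "tc (tw T) m = (if odd (length (filter id m)) then - tc T m else tc T m)"
  by (induction T arbitrary: m; case_tac m) auto

lemma wf_tw: "twf n T \<Longrightarrow> twf n (tw T)"
  by (induction n T rule: twf.induct) auto

lemma wf_lmul: "twf (length m) T \<Longrightarrow> twf (length m) (lmul m T)"
  by (induction m T rule: lmul.induct) auto

lemma wf_rmul: "twf (length m) T \<Longrightarrow> twf (length m) (rmul T m)"
  by (induction T m rule: rmul.induct) (auto simp: wf_tw)

lemma tc_lmul: "twf (length m) T \<Longrightarrow> length n = length m \<Longrightarrow>
   tc (lmul m T) n = (if par m (xorl m n) then - tc T (xorl m n) else tc T (xorl m n))"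
proof (induction m arbitrary: T n)
  case Nil then show ?case by (cases n) auto
next
  case (Cons a as)
  obtain T0 T1 where T: "T = Nd T0 T1" using Cons.prems by (cases T) auto
  obtain c ns where n: "n = c # ns" using Cons.prems by (cases n) auto
  have w: "twf (length as) T0" "twf (length as) T1" using Cons.prems T by auto
  have l: "length ns = length as" using Cons.prems n by auto
  show ?case using Cons.IH[OF w(1) l] Cons.IH[OF w(2) l] T n
    by (cases a; cases c) auto
qed

lemma tc_rmul: "twf (length m) T \<Longrightarrow> length n = length m \<Longrightarrow>
   tc (rmul T m) n = (if par (xorl n m) m then - tc T (xorl n m) else tc T (xorl n m))"
proof (induction m arbitrary: T n)
  case Nil then show ?case by (cases n) auto
next
  case (Cons b bs)
  obtain T0 T1 where T: "T = Nd T0 T1" using Cons.prems by (cases T) auto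
  obtain c ns where n: "n = c # ns" using Cons.prems by (cases n) auto
  have w: "twf (length bs) (tw T0)" "twf (length bs) (tw T1)" "twf (length bs) T0" "twf (length bs) T1"
    using Cons.prems T by (auto simp: wf_tw)
  have l: "length ns = length bs" using Cons.prems n by auto
  show ?case using Cons.IH[OF w(1) l] Cons.IH[OF w(2) l] Cons.IH[OF w(3) l] Cons.IH[OF w(4) l] T n
    by (cases b; cases c) (auto simp: tc_tw)
qed

lemma bset_exists: "C \<subseteq> {1..n} \<Longrightarrow> \<exists>m. length m = n \<and> bset m = C"
proof (induction n arbitrary: C)
  case 0 then show ?case by (intro exI[of _ "[]"]) auto
next
  case (Suc n)
  let ?C' = "{x. 1 \<le> x \<and> Suc x \<in> C}"
  have "?C' \<subseteq> {1..n}" using Suc.prems by auto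
  then obtain m where m: "length m = n" "bset m = ?C'" using Suc.IH by blast
  have "Suc ` ?C' = C - {1}"
  proof
    show "C - {1} \<subseteq> Suc ` ?C'"
    proof
      fix y assume y: "y \<in> C - {1}"
      then have "y \<ge> 2" using Suc.prems by force
      then have "y = Suc (y - 1)" "1 \<le> y - 1" by auto
      then show "y \<in> Suc ` ?C'" using y by (metis (mono_tags, lifting) DiffD1 imageI mem_Collect_eq)
    qed
  qed auto
  then have "bset ((1 \<in> C) # m) = C" using m by auto
  then show ?case using m by (intro exI[of _ "(1 \<in> C) # m"]) auto
qed

definition supp7 :: "mv \<Rightarrow> bool" where
  "supp7 f = (\<forall>C. \<not> C \<subseteq> {1..7} \<longrightarrow> f C = 0)"

lemma mv_eqI:
  assumes "supp7 f" "supp7 g" "\<And>n. length n = 7 \<Longrightarrow> f (bset n) = g (bset n)"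
  shows "f = g"
proof (rule ext)
  fix C show "f C = g C"
  proof (cases "C \<subseteq> {1..7}")
    case True then obtain n where "length n = 7" "bset n = C" using bset_exists by blast
    then show ?thesis using assms(3) by blast
  qed (use assms in \<open>auto simp: supp7_def\<close>)
qed

definition tv :: "tr \<Rightarrow> mv" where
  "tv T = (\<lambda>C. if C \<subseteq> {1..7} then tc T (SOME n. length n = 7 \<and> bset n = C) else 0)"

lemma tv_bset: "length n = 7 \<Longrightarrow> tv T (bset n) = tc T n"
proof -
  assume l: "length n = 7"
  have s: "bset n \<subseteq> {1..7}" using bset_sub[of n] l by simp
  have "\<exists>n'. length n' = 7 \<and> bset n' = bset n" using l by blast
  then have "length (SOME n'. length n' = 7 \<and> bset n' = bset n) = 7 \<and> bset (SOME n'. length n' = 7 \<and> bset n' = bset n) = bset n"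
    by (rule someI_ex)
  then have "(SOME n'. length n' = 7 \<and> bset n' = bset n) = n" using bset_inj l by auto
  then show ?thesis using s by (simp add: tv_def)
qed

lemma supp7_tv: "supp7 (tv T)" by (simp add: supp7_def tv_def)

lemma supp7_mult: "supp7 (x \<odot> y)"
  unfolding supp7_def cl_mult_def
proof (intro allI impI)
  fix C :: "nat set" assume C: "\<not> C \<subseteq> {1..7}"
  have "\<And>A B. A \<in> Pow {1..7} \<Longrightarrow> B \<in> Pow {1..7} \<Longrightarrow> (A - B) \<union> (B - A) \<noteq> C" using C by auto
  then show "(\<Sum>A\<in>Pow {1..7}. \<Sum>B\<in>Pow {1..7}. if (A - B) \<union> (B - A) = C then blade_sign A B * x A * y B else 0) = 0"
    by (intro sum.neutral ballI) simp
qed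

lemma supp7_add: "supp7 x \<Longrightarrow> supp7 y \<Longrightarrow> supp7 (x + y)" by (simp add: supp7_def)
lemma supp7_sc: "supp7 x \<Longrightarrow> supp7 (sc c x)" by (simp add: supp7_def sc_def)
lemma supp7_grade: "supp7 x \<Longrightarrow> supp7 (grade k x)" by (simp add: supp7_def grade_def)

lemma supp7_lc: "ok 7 xs \<Longrightarrow> supp7 (lc xs)"
  unfolding supp7_def lc_apply
proof (intro allI impI)
  fix C :: "nat set" assume ok: "ok 7 xs" and C: "\<not> C \<subseteq> {1..7}"
  have "filter (\<lambda>p. bset (fst p) = C) xs = []"
    using ok C bset_sub by (force simp: ok_def list_all_iff filter_empty_conv)
  then show "sum_list (map snd (filter (\<lambda>p. bset (fst p) = C) xs)) = 0" by simp
qed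

lemma symd_bset: "length m = 7 \<Longrightarrow> length n = 7 \<Longrightarrow> (bset m - bset n) \<union> (bset n - bset m) = bset (xorl m n)"
  using bset_xorl by simp

lemma left_bl_apply:
  assumes "length m = 7" "length n = 7"
  shows "(bl (bset m) \<odot> f) (bset n) = blade_sign (bset m) (bset (xorl m n)) * f (bset (xorl m n))"
proof -
  let ?A = "bset m" and ?K = "bset (xorl m n)"
  have Am: "?A \<in> Pow {1..7}" using bset_sub[of m] assms by auto
  have Km: "?K \<in> Pow {1..7}" using bset_sub[of "xorl m n"] assms by auto
  have key: "(?A - B) \<union> (B - ?A) = bset n \<longleftrightarrow> B = ?K" for B
  proof -
    have "?K = (?A - bset n) \<union> (bset n - ?A)" using symd_bset assms by simp
    then show ?thesis by blast
  qed
  have "(bl ?A \<odot> f) (bset n) = (\<Sum>A'\<in>Pow {1..7}. \<Sum>B\<in>Pow {1..7}.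
       (if B = ?K then (if A' = ?A then blade_sign ?A ?K * f ?K else 0) else 0))"
    unfolding cl_mult_def by (rule sum.cong[OF refl], rule sum.cong[OF refl]) (auto simp: bl_def key)
  also have "\<dots> = blade_sign ?A ?K * f ?K" using Am Km by (simp add: sum.delta)
  finally show ?thesis .
qed

lemma right_bl_apply:
  assumes "length m = 7" "length n = 7"
  shows "(f \<odot> bl (bset m)) (bset n) = blade_sign (bset (xorl n m)) (bset m) * f (bset (xorl n m))"
proof -
  let ?B = "bset m" and ?K = "bset (xorl n m)"
  have Bm: "?B \<in> Pow {1..7}" using bset_sub[of m] assms by auto
  have Km: "?K \<in> Pow {1..7}" using bset_sub[of "xorl n m"] assms by auto
  have key: "(A - ?B) \<union> (?B - A) = bset n \<longleftrightarrow> A = ?K" for A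
  proof -
    have "?K = (bset n - ?B) \<union> (?B - bset n)" using symd_bset assms by simp
    then show ?thesis by blast
  qed
  have "(f \<odot> bl ?B) (bset n) = (\<Sum>A\<in>Pow {1..7}. \<Sum>B'\<in>Pow {1..7}.
       (if B' = ?B then (if A = ?K then blade_sign ?K ?B * f ?K else 0) else 0))"
    unfolding cl_mult_def by (rule sum.cong[OF refl], rule sum.cong[OF refl]) (auto simp: bl_def key)
  also have "\<dots> = (\<Sum>A\<in>Pow {1..7}. (if A = ?K then blade_sign ?K ?B * f ?K else 0))"
    using Bm by (simp add: sum.delta)
  also have "\<dots> = blade_sign ?K ?B * f ?K" using Km by (simp add: sum.delta)
  finally show ?thesis .
qed

lemma tv_lmul: "twf 7 T \<Longrightarrow> length m = 7 \<Longrightarrow> bl (bset m) \<odot> tv T = tv (lmul m T)"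
  apply (rule mv_eqI[OF supp7_mult supp7_tv])
  apply (simp add: left_bl_apply tv_bset tc_lmul blade_sign_par)
  done

lemma tv_rmul: "twf 7 T \<Longrightarrow> length m = 7 \<Longrightarrow> tv T \<odot> bl (bset m) = tv (rmul T m)"
  apply (rule mv_eqI[OF supp7_mult supp7_tv])
  apply (simp add: right_bl_apply tv_bset tc_rmul blade_sign_par)
  done

lemma tv_add: "twf 7 A \<Longrightarrow> twf 7 B \<Longrightarrow> tv A + tv B = tv (tadd A B)"
  by (rule mv_eqI[OF supp7_add[OF supp7_tv supp7_tv] supp7_tv]) (simp add: tv_bset tc_tadd)

lemma tv_sc: "sc c (tv A) = tv (tsc c A)"
  by (rule mv_eqI[OF supp7_sc[OF supp7_tv] supp7_tv]) (simp add: tv_bset sc_def)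

lemma tv_uminus: "- tv A = tv (tsc (-1) A)"
  using tv_sc[of "-1" A] by (simp add: sc_def fun_eq_iff)

lemma tv_minus: "twf 7 A \<Longrightarrow> twf 7 B \<Longrightarrow> tv A - tv B = tv (tadd A (tsc (-1) B))"
  using tv_add[of A "tsc (-1) B"] tv_uminus[of B] by (simp add: diff_conv_add_uminus)

lemma tv_grade: "grade k (tv A) = tv (tgr k A)"
  by (rule mv_eqI[OF supp7_grade[OF supp7_tv] supp7_tv]) (simp add: tv_bset tc_tgr grade_def card_bset)

lemma wf_lmulL: "twf 7 T \<Longrightarrow> ok 7 xs \<Longrightarrow> twf 7 (lmulL xs T)"
proof (induction xs T rule: lmulL.induct)
  case (2 m c xs T)
  then have "twf (length m) (lmul m T)" using wf_lmul[of m T] by simp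
  then show ?case using 2 by (auto intro!: wf_tadd)
qed simp

lemma tv_lmulL: "twf 7 T \<Longrightarrow> ok 7 xs \<Longrightarrow> lc xs \<odot> tv T = tv (lmulL xs T)"
proof (induction xs T rule: lmulL.induct)
  case (1 T)
  have "tv (tsc 0 T) = sc 0 (tv T)" by (simp add: tv_sc)
  also have "\<dots> = 0" by (simp add: sc_def fun_eq_iff)
  finally show ?case by (simp add: lc_Nil mult_zero_left mult_zero_left')
next
  case (2 m c xs T)
  have wl: "twf 7 (lmul m T)" using wf_lmul[of m T] 2 by simp
  have "lc ((m, c) # xs) \<odot> tv T = sc c (bl (bset m) \<odot> tv T) + lc xs \<odot> tv T"
    by (simp only: lc_Cons mult_add_left mult_sc_left)
  also have "\<dots> = tv (tsc c (lmul m T)) + tv (lmulL xs T)" using 2 by (simp add: tv_lmul tv_sc)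
  also have "\<dots> = tv (lmulL ((m, c) # xs) T)" using 2 wl wf_lmulL[of T xs]
    by (simp add: tv_add)
  finally show ?case .
qed

fun zt :: "nat \<Rightarrow> tr" where
  "zt 0 = Lf 0"
| "zt (Suc k) = Nd (zt k) (zt k)"

fun e0t :: "nat \<Rightarrow> tr" where
  "e0t 0 = Lf 1"
| "e0t (Suc k) = Nd (e0t k) (zt k)"

lemma tc_zt: "tc (zt k) n = 0"
  by (induction k arbitrary: n; case_tac n) auto

lemma bset_empty_iff: "bset n = {} \<longleftrightarrow> n = replicate (length n) False"
proof (induction n)
  case (Cons x n)
  have "bset n = {} \<longleftrightarrow> Suc ` bset n = {}" by simp
  then show ?case using Cons by auto
qed simp

lemma tc_e0t: "length n = k \<Longrightarrow> tc (e0t k) n = (if n = replicate k False then 1 else 0)"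
  by (induction k arbitrary: n; case_tac n) (auto simp: tc_zt)

lemma twf_zt: "twf k (zt k)" by (induction k) auto
lemma twf_e0t: "twf k (e0t k)" by (induction k) (auto simp: twf_zt)

lemma blade_sign_empty: "blade_sign A {} = 1"
  by (simp add: blade_sign_def)

lemma right_unit: "supp7 f \<Longrightarrow> f \<odot> bl {} = f"
proof (rule mv_eqI[OF supp7_mult])
  fix n :: "bool list" assume f: "supp7 f" and n: "length n = 7"
  let ?F = "replicate 7 False"
  have e: "bset ?F = {}" by (simp add: bset_empty_iff)
  have x0: "xorl k (replicate (length k) False) = k" for k by (induction k) auto
  have x: "xorl n ?F = n" using x0[of n] n by simp
  show "(f \<odot> bl {}) (bset n) = f (bset n)"
    using right_bl_apply[of ?F n f] n e x by (simp add: blade_sign_empty)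
qed

lemma tv_e0t: "tv (e0t 7) = bl {}"
proof (rule mv_eqI[OF supp7_tv])
  show "supp7 (bl {})" by (auto simp: supp7_def bl_def)
  fix n :: "bool list" assume n: "length n = 7"
  show "tv (e0t 7) (bset n) = bl {} (bset n)"
    using n by (simp add: tv_bset tc_e0t bl_def bset_empty_iff)
qed

lemma lc_tv: "ok 7 xs \<Longrightarrow> lc xs = tv (lmulL xs (e0t 7))"
  using tv_lmulL[of "e0t 7" xs] twf_e0t[of 7] tv_e0t right_unit[OF supp7_lc] by simp

lemma e0t7: "e0t 7 = e0t (Suc (Suc (Suc (Suc (Suc (Suc (Suc 0)))))))"
  by (simp add: numeral_eq_Suc)

lemma mult_lc_lc: "ok 7 xs \<Longrightarrow> ok 7 ys \<Longrightarrow> lc xs \<odot> lc ys = tv (lmulL xs (lmulL ys (e0t 7)))"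
  by (simp add: lc_tv[of ys] tv_lmulL twf_e0t wf_lmulL)

lemma lc_single: "lc [(m, c)] = sc c (bl (bset m))"
  by (simp add: lc_Cons lc_Nil)

lemma mult_tv_lc1: "twf 7 T \<Longrightarrow> length m = 7 \<Longrightarrow> tv T \<odot> lc [(m, c)] = tv (tsc c (rmul T m))"
  by (simp add: lc_single mult_sc_right tv_rmul tv_sc)

lemma twf7: "twf 7 T = twf (Suc (Suc (Suc (Suc (Suc (Suc (Suc 0))))))) T"
  by (simp add: numeral_eq_Suc)

lemma lc_add_tv: "ok 7 xs \<Longrightarrow> twf 7 B \<Longrightarrow> lc xs + tv B = tv (tadd (lmulL xs (e0t 7)) B)"
  by (simp add: lc_tv tv_add wf_lmulL twf_e0t)
lemma tv_add_lc: "ok 7 xs \<Longrightarrow> twf 7 B \<Longrightarrow> tv B + lc xs = tv (tadd B (lmulL xs (e0t 7)))"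
  by (simp add: lc_tv tv_add wf_lmulL twf_e0t)
lemma lc_minus_tv: "ok 7 xs \<Longrightarrow> twf 7 B \<Longrightarrow> lc xs - tv B = tv (tadd (lmulL xs (e0t 7)) (tsc (-1) B))"
  by (simp add: lc_tv tv_minus wf_lmulL twf_e0t)
lemma tv_minus_lc: "ok 7 xs \<Longrightarrow> twf 7 B \<Longrightarrow> tv B - lc xs = tv (tadd B (tsc (-1) (lmulL xs (e0t 7))))"
  by (simp add: lc_tv tv_minus wf_lmulL twf_e0t)
lemma lc_eq_tv: "ok 7 xs \<Longrightarrow> lmulL xs (e0t 7) = B \<Longrightarrow> lc xs = tv B"
  by (simp add: lc_tv)
lemma tv_eqI: "A = B \<Longrightarrow> tv A = tv B" by simp

lemmas totv = mult_lc_lc mult_tv_lc1 tv_add tv_minus tv_sc tv_uminus tv_grade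
  lc_add_tv tv_add_lc lc_minus_tv tv_minus_lc e0t7 twf7 lc_sc lc_uminus lc_add lc_minus grade_lc

fun tz :: "tr \<Rightarrow> bool" where
  "tz (Lf x) = (x = 0)"
| "tz (Nd a b) = (tz a \<and> tz b)"

lemma tz_iff: "twf k T \<Longrightarrow> tz T \<longleftrightarrow> (\<forall>n. length n = k \<longrightarrow> tc T n = 0)"
proof (induction k T rule: twf.induct)
  case (2 k a b)
  have "(\<forall>n. length n = Suc k \<longrightarrow> tc (Nd a b) n = 0) \<longleftrightarrow>
        (\<forall>n. length n = k \<longrightarrow> tc a n = 0) \<and> (\<forall>n. length n = k \<longrightarrow> tc b n = 0)"
  proof
    assume h: "\<forall>n. length n = Suc k \<longrightarrow> tc (Nd a b) n = 0"
    have "tc a n = 0 \<and> tc b n = 0" if "length n = k" for n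
      using h[rule_format, of "False # n"] h[rule_format, of "True # n"] that by simp
    then show "(\<forall>n. length n = k \<longrightarrow> tc a n = 0) \<and> (\<forall>n. length n = k \<longrightarrow> tc b n = 0)" by blast
  next
    assume h: "(\<forall>n. length n = k \<longrightarrow> tc a n = 0) \<and> (\<forall>n. length n = k \<longrightarrow> tc b n = 0)"
    show "\<forall>n. length n = Suc k \<longrightarrow> tc (Nd a b) n = 0"
    proof (intro allI impI)
      fix n :: "bool list" assume "length n = Suc k"
      then obtain c n' where "n = c # n'" "length n' = k" by (cases n) auto
      then show "tc (Nd a b) n = 0" using h by (cases c) auto
    qed
  qed
  then show ?case using 2 by simp
qed (auto simp: length_Suc_conv)

lemma tv_zero_iff: "twf 7 T \<Longrightarrow> (tv T = 0) = tz T"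
proof -
  assume w: "twf 7 T"
  have "tv T = 0 \<longleftrightarrow> (\<forall>n. length n = 7 \<longrightarrow> tc T n = 0)"
  proof
    assume "tv T = 0" then show "\<forall>n. length n = 7 \<longrightarrow> tc T n = 0" by (metis tv_bset zero_fun_apply)
  next
    assume h: "\<forall>n. length n = 7 \<longrightarrow> tc T n = 0"
    show "tv T = 0" by (rule mv_eqI[OF supp7_tv]) (auto simp: supp7_def tv_bset h)
  qed
  then show ?thesis using tz_iff[OF w] by simp
qed

lemma tv_eq_lc: "ok 7 xs \<Longrightarrow> B = lmulL xs (e0t 7) \<Longrightarrow> tv B = lc xs"
  by (simp add: lc_tv)

lemma a1: "{..(7::nat)} = {0,1,2,3,4,5,6,7}" by (simp add: atMost_Suc numeral_eq_Suc insert_commute)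
lemma all_le7: "(\<forall>k\<le>(7::nat). P k) \<longleftrightarrow> P 0 \<and> P 1 \<and> P 2 \<and> P 3 \<and> P 4 \<and> P 5 \<and> P 6 \<and> P 7"
proof -
  have "(\<forall>k\<le>(7::nat). P k) \<longleftrightarrow> (\<forall>k\<in>{..7}. P k)" by auto
  then show ?thesis unfolding a1 by simp
qed

lemma set25: "{2..5::nat} = {2,3,4,5}" by auto

lemma L2:
  fixes s v1x v2x v3x v4x v5x v6x v7x :: real
  shows "let X = lc [([False,False,False,False,False,False,False], s), ([True,False,False,False,False,False,False], v1x), ([False,True,False,False,False,False,False], v2x), ([False,False,True,False,False,False,False], v3x), ([False,False,False,True,False,False,False], v4x), ([False,False,False,False,True,False,False], v5x), ([False,False,False,False,False,True,False], v6x), ([False,False,False,False,False,False,True], v7x)] \<odot> Iminus in (\<forall>k\<le>7. grade k X = 0 \<longleftrightarrow> grade (7 - k) X = 0) \<and> (grade 0 X = 0 \<longrightarrow> (\<forall>j\<in>{2..5}. \<forall>l\<in>{2..5}. grade j X = 0 \<longleftrightarrow> grade l X = 0)) \<and> (grade 0 X = 0 \<and> grade 1 X = 0 \<and> grade 2 X = 0 \<longrightarrow> X = 0)"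
proof -
  define X where "X = lc [([False,False,False,False,False,False,False], s), ([True,False,False,False,False,False,False], v1x), ([False,True,False,False,False,False,False], v2x), ([False,False,True,False,False,False,False], v3x), ([False,False,False,True,False,False,False], v4x), ([False,False,False,False,True,False,False], v5x), ([False,False,False,False,False,True,False], v6x), ([False,False,False,False,False,False,True], v7x)] \<odot> Iminus"
  let ?V = "v1x = 0 \<and> v2x = 0 \<and> v3x = 0 \<and> v4x = 0 \<and> v5x = 0 \<and> v6x = 0 \<and> v7x = 0"
  have g0: "(grade 0 X = 0) = (s = 0)" unfolding X_def Iminus_lc by (simp add: totv tv_zero_iff)
  have g1: "(grade 1 X = 0) = ?V" unfolding X_def Iminus_lc by (simp add: totv tv_zero_iff; blast?)
  have g1s: "(grade (Suc 0) X = 0) = ?V" using g1 by simp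
  have g2: "(grade 2 X = 0) = ?V" unfolding X_def Iminus_lc by (simp add: totv tv_zero_iff; blast?)
  have g3: "(grade 3 X = 0) = (s = 0 \<and> ?V)" unfolding X_def Iminus_lc by (simp add: totv tv_zero_iff; blast?)
  have g4: "(grade 4 X = 0) = (s = 0 \<and> ?V)" unfolding X_def Iminus_lc by (simp add: totv tv_zero_iff; blast?)
  have g5: "(grade 5 X = 0) = ?V" unfolding X_def Iminus_lc by (simp add: totv tv_zero_iff; blast?)
  have g6: "(grade 6 X = 0) = ?V" unfolding X_def Iminus_lc by (simp add: totv tv_zero_iff; blast?)
  have g7: "(grade 7 X = 0) = (s = 0)" unfolding X_def Iminus_lc by (simp add: totv tv_zero_iff)
  have gx: "(X = 0) = (s = 0 \<and> ?V)" unfolding X_def Iminus_lc by (simp add: totv tv_zero_iff; blast?)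
  show ?thesis unfolding Let_def X_def[symmetric] all_le7 set25
    by (simp add: g0 g1 g1s g2 g3 g4 g5 g6 g7 gx; blast?)
qed

lemma L1:
  fixes p0x p1x p2x p3x p4x p5x p6x p7x q12x q13x q14x q15x q16x q17x q23x q24x q25x q26x q27x q34x q35x q36x q37x q45x q46x q47x q56x q57x q67x :: real
  shows "lc [([False,False,False,False,False,False,False], p0x), ([True,False,False,False,False,False,False], p1x), ([False,True,False,False,False,False,False], p2x), ([False,False,True,False,False,False,False], p3x), ([False,False,False,True,False,False,False], p4x), ([False,False,False,False,True,False,False], p5x), ([False,False,False,False,False,True,False], p6x), ([False,False,False,False,False,False,True], p7x), ([True,True,False,False,False,False,False], q12x), ([True,False,True,False,False,False,False], q13x), ([True,False,False,True,False,False,False], q14x), ([True,False,False,False,True,False,False], q15x), ([True,False,False,False,False,True,False], q16x), ([True,False,False,False,False,False,True], q17x), ([False,True,True,False,False,False,False], q23x), ([False,True,False,True,False,False,False], q24x), ([False,True,False,False,True,False,False], q25x), ([False,True,False,False,False,True,False], q26x), ([False,True,False,False,False,False,True], q27x), ([False,False,True,True,False,False,False], q34x), ([False,False,True,False,True,False,False], q35x), ([False,False,True,False,False,True,False], q36x), ([False,False,True,False,False,False,True], q37x), ([False,False,False,True,True,False,False], q45x), ([False,False,False,True,False,True,False], q46x), ([False,False,False,True,False,False,True], q47x), ([False,False,False,False,True,True,False], q56x), ([False,False,False,False,True,False,True], q57x), ([False,False,False,False,False,True,True], q67x)] \<odot> Iminus = lc [([False,False,False,False,False,False,False], p0x), ([True,False,False,False,False,False,False],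 (p1x + q23x + q45x - q67x)), ([False,True,False,False,False,False,False], (p2x - q13x + q46x + q57x)), ([False,False,True,False,False,False,False], (p3x + q12x + q47x - q56x)), ([False,False,False,True,False,False,False], (p4x - q15x - q26x - q37x)), ([False,False,False,False,True,False,False], (p5x + q14x - q27x + q36x)), ([False,False,False,False,False,True,False], (p6x + q17x + q24x - q35x)), ([False,False,False,False,False,False,True], (p7x - q16x + q25x + q34x))] \<odot> Iminus"
  unfolding Iminus_lc
  by (simp add: totv, (rule tv_eqI)?, (simp add: field_simps)?)

lemma F0:
  fixes p0x p1x p2x p3x p4x p5x p6x p7x q12x q13x q14x q15x q16x q17x q23x q24x q25x q26x q27x q34x q35x q36x q37x q45x q46x q47x q56x q57x q67x :: real
  shows "let X = lc [([False,False,False,False,False,False,False], p0x), ([True,False,False,False,False,False,False], (p1x + q23x + q45x - q67x)), ([False,True,False,False,False,False,False], (p2x - q13x + q46x + q57x)), ([False,False,True,False,False,False,False], (p3x + q12x + q47x - q56x)), ([False,False,False,True,False,False,False], (p4x - q15x - q26x - q37x)), ([False,False,False,False,True,False,False], (p5x + q14x - q27x + q36x)), ([False,False,False,False,False,True,False], (p6x + q17x + q24x - q35x)), ([False,False,False,False,False,False,True], (p7x - q16x + q25x + q34x))] \<odot> Iminus; S = p0x; V = lc [([True,False,False,False,False,False,False], p1x), ([False,True,False,False,False,False,False], p2x), ([False,False,True,False,False,False,False], p3x), ([False,False,False,True,False,False,False], p4x), ([False,False,False,False,True,False,False], p5x), ([False,False,False,False,False,True,False], p6x), ([False,False,False,False,False,False,True],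 p7x)]; D = lc [([True,True,False,False,False,False,False], q12x), ([True,False,True,False,False,False,False], q13x), ([True,False,False,True,False,False,False], q14x), ([True,False,False,False,True,False,False], q15x), ([True,False,False,False,False,True,False], q16x), ([True,False,False,False,False,False,True], q17x), ([False,True,True,False,False,False,False], q23x), ([False,True,False,True,False,False,False], q24x), ([False,True,False,False,True,False,False], q25x), ([False,True,False,False,False,True,False], q26x), ([False,True,False,False,False,False,True], q27x), ([False,False,True,True,False,False,False], q34x), ([False,False,True,False,True,False,False], q35x), ([False,False,True,False,False,True,False], q36x), ([False,False,True,False,False,False,True], q37x), ([False,False,False,True,True,False,False], q45x), ([False,False,False,True,False,True,False], q46x), ([False,False,False,True,False,False,True], q47x), ([False,False,False,False,True,True,False], q56x), ([False,False,False,False,True,False,True], q57x), ([False,False,False,False,False,True,True], q67x)] in sc 16 (grade 0 X) = scal S"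
  unfolding Let_def Iminus_lc Wc_lc e7_lc scal_lc
  by (simp add: totv tv_eq_lc, (rule tv_eqI)?, (simp add: field_simps)?)

lemma F1:
  fixes p0x p1x p2x p3x p4x p5x p6x p7x q12x q13x q14x q15x q16x q17x q23x q24x q25x q26x q27x q34x q35x q36x q37x q45x q46x q47x q56x q57x q67x :: real
  shows "let X = lc [([False,False,False,False,False,False,False], p0x), ([True,False,False,False,False,False,False], (p1x + q23x + q45x - q67x)), ([False,True,False,False,False,False,False], (p2x - q13x + q46x + q57x)), ([False,False,True,False,False,False,False], (p3x + q12x + q47x - q56x)), ([False,False,False,True,False,False,False], (p4x - q15x - q26x - q37x)), ([False,False,False,False,True,False,False], (p5x + q14x - q27x + q36x)), ([False,False,False,False,False,True,False], (p6x + q17x + q24x - q35x)), ([False,False,False,False,False,False,True], (p7x - q16x + q25x + q34x))] \<odot> Iminus; S = p0x; V = lc [([True,False,False,False,False,False,False], p1x), ([False,True,False,False,False,False,False], p2x), ([False,False,True,False,False,False,False], p3x), ([False,False,False,True,False,False,False], p4x), ([False,False,False,False,True,False,False], p5x), ([False,False,False,False,False,True,False], p6x), ([False,False,False,False,False,False,True], p7x)]; D = lc [([True,True,False,False,False,False,False], q12x), ([True,False,True,False,False,False,False], q13x), ([True,False,False,True,False,False,False], q14x), ([True,False,False,False,True,False,False], q15x), ([True,False,False,False,False,True,False], q16x), ([True,False,False,False,False,False,True], q17x), ([False,True,True,False,False,False,False], q23x), ([False,True,False,True,False,False,False], q24x), ([False,True,False,False,True,False,False], q25x), ([False,True,False,False,False,True,False],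 q26x), ([False,True,False,False,False,False,True], q27x), ([False,False,True,True,False,False,False], q34x), ([False,False,True,False,True,False,False], q35x), ([False,False,True,False,False,True,False], q36x), ([False,False,True,False,False,False,True], q37x), ([False,False,False,True,True,False,False], q45x), ([False,False,False,True,False,True,False], q46x), ([False,False,False,True,False,False,True], q47x), ([False,False,False,False,True,True,False], q56x), ([False,False,False,False,True,False,True], q57x), ([False,False,False,False,False,True,True], q67x)] in sc 16 (grade 1 X) = V - grade 1 (D \<odot> Wc)"
  unfolding Let_def Iminus_lc Wc_lc e7_lc scal_lc
  by (simp add: totv tv_eq_lc, (rule tv_eqI)?, (simp add: field_simps)?)

lemma F2:
  fixes p0x p1x p2x p3x p4x p5x p6x p7x q12x q13x q14x q15x q16x q17x q23x q24x q25x q26x q27x q34x q35x q36x q37x q45x q46x q47x q56x q57x q67x :: real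
  shows "let X = lc [([False,False,False,False,False,False,False], p0x), ([True,False,False,False,False,False,False], (p1x + q23x + q45x - q67x)), ([False,True,False,False,False,False,False], (p2x - q13x + q46x + q57x)), ([False,False,True,False,False,False,False], (p3x + q12x + q47x - q56x)), ([False,False,False,True,False,False,False], (p4x - q15x - q26x - q37x)), ([False,False,False,False,True,False,False], (p5x + q14x - q27x + q36x)), ([False,False,False,False,False,True,False], (p6x + q17x + q24x - q35x)), ([False,False,False,False,False,False,True], (p7x - q16x + q25x + q34x))] \<odot> Iminus; S = p0x; V = lc [([True,False,False,False,False,False,False], p1x), ([False,True,False,False,False,False,False], p2x), ([False,False,True,False,False,False,False], p3x), ([False,False,False,True,False,False,False], p4x), ([False,False,False,False,True,False,False], p5x), ([False,False,False,False,False,True,False], p6x), ([False,False,False,False,False,False,True], p7x)]; D = lc [([True,True,False,False,False,False,False], q12x), ([True,False,True,False,False,False,False], q13x), ([True,False,False,True,False,False,False], q14x), ([True,False,False,False,True,False,False], q15x), ([True,False,False,False,False,True,False], q16x), ([True,False,False,False,False,False,True], q17x), ([False,True,True,False,False,False,False], q23x), ([False,True,False,True,False,False,False], q24x), ([False,True,False,False,True,False,False], q25x), ([False,True,False,False,False,True,False], q26x), ([False,True,False,False,False,False,True], q27x), ([False,False,True,True,False,False,False], q34x), ([False,False,True,False,True,False,False], q35x), ([False,False,True,False,False,True,False], q36x), ([False,False,True,False,False,False,True], q37x), ([False,False,False,True,True,False,False], q45x), ([False,False,False,True,False,True,False], q46x), ([False,False,False,True,False,False,True], q47x), ([False,False,False,False,True,True,False],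 q56x), ([False,False,False,False,True,False,True], q57x), ([False,False,False,False,False,True,True], q67x)] in sc 16 (grade 2 X) = D - grade 2 (V \<odot> Wc) + grade 2 (D \<odot> Wc \<odot> e7)"
  unfolding Let_def Iminus_lc Wc_lc e7_lc scal_lc
  by (simp add: totv tv_eq_lc, (rule tv_eqI)?, (simp add: field_simps)?)

lemma F3:
  fixes p0x p1x p2x p3x p4x p5x p6x p7x q12x q13x q14x q15x q16x q17x q23x q24x q25x q26x q27x q34x q35x q36x q37x q45x q46x q47x q56x q57x q67x :: real
  shows "let X = lc [([False,False,False,False,False,False,False], p0x), ([True,False,False,False,False,False,False], (p1x + q23x + q45x - q67x)), ([False,True,False,False,False,False,False], (p2x - q13x + q46x + q57x)), ([False,False,True,False,False,False,False], (p3x + q12x + q47x - q56x)), ([False,False,False,True,False,False,False], (p4x - q15x - q26x - q37x)), ([False,False,False,False,True,False,False], (p5x + q14x - q27x + q36x)), ([False,False,False,False,False,True,False], (p6x + q17x + q24x - q35x)), ([False,False,False,False,False,False,True], (p7x - q16x + q25x + q34x))] \<odot> Iminus; S = p0x; V = lc [([True,False,False,False,False,False,False], p1x), ([False,True,False,False,False,False,False], p2x), ([False,False,True,False,False,False,False], p3x), ([False,False,False,True,False,False,False], p4x), ([False,False,False,False,True,False,False], p5x), ([False,False,False,False,False,True,False], p6x), ([False,False,False,False,False,False,True], p7x)]; D = lc [([True,True,False,False,False,False,False], q12x), ([True,False,True,False,False,False,False], q13x), ([True,False,False,True,False,False,False], q14x), ([True,False,False,False,True,False,False], q15x), ([True,False,False,False,False,True,False],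 q16x), ([True,False,False,False,False,False,True], q17x), ([False,True,True,False,False,False,False], q23x), ([False,True,False,True,False,False,False], q24x), ([False,True,False,False,True,False,False], q25x), ([False,True,False,False,False,True,False], q26x), ([False,True,False,False,False,False,True], q27x), ([False,False,True,True,False,False,False], q34x), ([False,False,True,False,True,False,False], q35x), ([False,False,True,False,False,True,False], q36x), ([False,False,True,False,False,False,True], q37x), ([False,False,False,True,True,False,False], q45x), ([False,False,False,True,False,True,False], q46x), ([False,False,False,True,False,False,True], q47x), ([False,False,False,False,True,True,False], q56x), ([False,False,False,False,True,False,True], q57x), ([False,False,False,False,False,True,True], q67x)] in sc 16 (grade 3 X) = - sc S Wc + grade 3 (V \<odot> Wc \<odot> e7) - grade 3 (D \<odot> Wc)"
  unfolding Let_def Iminus_lc Wc_lc e7_lc scal_lc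
  by (simp add: totv tv_eq_lc, (rule tv_eqI)?, (simp add: field_simps)?)

lemma F4:
  fixes p0x p1x p2x p3x p4x p5x p6x p7x q12x q13x q14x q15x q16x q17x q23x q24x q25x q26x q27x q34x q35x q36x q37x q45x q46x q47x q56x q57x q67x :: real
  shows "let X = lc [([False,False,False,False,False,False,False], p0x), ([True,False,False,False,False,False,False], (p1x + q23x + q45x - q67x)), ([False,True,False,False,False,False,False], (p2x - q13x + q46x + q57x)), ([False,False,True,False,False,False,False], (p3x + q12x + q47x - q56x)), ([False,False,False,True,False,False,False], (p4x - q15x - q26x - q37x)), ([False,False,False,False,True,False,False], (p5x + q14x - q27x + q36x)), ([False,False,False,False,False,True,False], (p6x + q17x + q24x - q35x)), ([False,False,False,False,False,False,True], (p7x - q16x + q25x + q34x))] \<odot> Iminus; S = p0x; V = lc [([True,False,False,False,False,False,False], p1x), ([False,True,False,False,False,False,False], p2x), ([False,False,True,False,False,False,False], p3x), ([False,False,False,True,False,False,False], p4x), ([False,False,False,False,True,False,False], p5x), ([False,False,False,False,False,True,False], p6x), ([False,False,False,False,False,False,True], p7x)]; D = lc [([True,True,False,False,False,False,False], q12x), ([True,False,True,False,False,False,False], q13x), ([True,False,False,True,False,False,False], q14x), ([True,False,False,False,True,False,False], q15x), ([True,False,False,False,False,True,False], q16x), ([True,False,False,False,False,False,True], q17x), ([False,True,True,False,False,False,False], q23x), ([False,True,False,True,False,False,False], q24x), ([False,True,False,False,True,False,False], q25x), ([False,True,False,False,False,True,False], q26x), ([False,True,False,False,False,False,True], q27x), ([False,False,True,True,False,False,False],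 q34x), ([False,False,True,False,True,False,False], q35x), ([False,False,True,False,False,True,False], q36x), ([False,False,True,False,False,False,True], q37x), ([False,False,False,True,True,False,False], q45x), ([False,False,False,True,False,True,False], q46x), ([False,False,False,True,False,False,True], q47x), ([False,False,False,False,True,True,False], q56x), ([False,False,False,False,True,False,True], q57x), ([False,False,False,False,False,True,True], q67x)] in sc 16 (grade 4 X) = sc S (Wc \<odot> e7) - grade 4 (V \<odot> Wc) + grade 4 (D \<odot> Wc \<odot> e7)"
  unfolding Let_def Iminus_lc Wc_lc e7_lc scal_lc
  by (simp add: totv tv_eq_lc, (rule tv_eqI)?, (simp add: field_simps)?)

lemma F5:
  fixes p0x p1x p2x p3x p4x p5x p6x p7x q12x q13x q14x q15x q16x q17x q23x q24x q25x q26x q27x q34x q35x q36x q37x q45x q46x q47x q56x q57x q67x :: real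
  shows "let X = lc [([False,False,False,False,False,False,False], p0x), ([True,False,False,False,False,False,False], (p1x + q23x + q45x - q67x)), ([False,True,False,False,False,False,False], (p2x - q13x + q46x + q57x)), ([False,False,True,False,False,False,False], (p3x + q12x + q47x - q56x)), ([False,False,False,True,False,False,False], (p4x - q15x - q26x - q37x)), ([False,False,False,False,True,False,False], (p5x + q14x - q27x + q36x)), ([False,False,False,False,False,True,False], (p6x + q17x + q24x - q35x)), ([False,False,False,False,False,False,True], (p7x - q16x + q25x + q34x))] \<odot> Iminus; S = p0x; V = lc [([True,False,False,False,False,False,False], p1x), ([False,True,False,False,False,False,False], p2x), ([False,False,True,False,False,False,False], p3x), ([False,False,False,True,False,False,False], p4x), ([False,False,False,False,True,False,False], p5x), ([False,False,False,False,False,True,False], p6x), ([False,False,False,False,False,False,True], p7x)]; D = lc [([True,True,False,False,False,False,False], q12x), ([True,False,True,False,False,False,False], q13x), ([True,False,False,True,False,False,False], q14x), ([True,False,False,False,True,False,False], q15x), ([True,False,False,False,False,True,False], q16x), ([True,False,False,False,False,False,True], q17x), ([False,True,True,False,False,False,False], q23x), ([False,True,False,True,False,False,False], q24x), ([False,True,False,False,True,False,False], q25x), ([False,True,False,False,False,True,False], q26x), ([False,True,False,False,False,False,True], q27x), ([False,False,True,True,False,False,False], q34x), ([False,False,True,False,True,False,False], q35x), ([False,False,True,False,False,True,False], q36x), ([False,False,True,False,False,False,True], q37x), ([False,False,False,True,True,False,False], q45x), ([False,False,False,True,False,True,False], q46x), ([False,False,False,True,False,False,True], q47x), ([False,False,False,False,True,True,False],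 q56x), ([False,False,False,False,True,False,True], q57x), ([False,False,False,False,False,True,True], q67x)] in sc 16 (grade 5 X) = grade 5 (V \<odot> Wc \<odot> e7) - grade 5 (D \<odot> Wc) - D \<odot> e7"
  unfolding Let_def Iminus_lc Wc_lc e7_lc scal_lc
  by (simp add: totv tv_eq_lc, (rule tv_eqI)?, (simp add: field_simps)?)

lemma F6:
  fixes p0x p1x p2x p3x p4x p5x p6x p7x q12x q13x q14x q15x q16x q17x q23x q24x q25x q26x q27x q34x q35x q36x q37x q45x q46x q47x q56x q57x q67x :: real
  shows "let X = lc [([False,False,False,False,False,False,False], p0x), ([True,False,False,False,False,False,False], (p1x + q23x + q45x - q67x)), ([False,True,False,False,False,False,False], (p2x - q13x + q46x + q57x)), ([False,False,True,False,False,False,False], (p3x + q12x + q47x - q56x)), ([False,False,False,True,False,False,False], (p4x - q15x - q26x - q37x)), ([False,False,False,False,True,False,False], (p5x + q14x - q27x + q36x)), ([False,False,False,False,False,True,False], (p6x + q17x + q24x - q35x)), ([False,False,False,False,False,False,True], (p7x - q16x + q25x + q34x))] \<odot> Iminus; S = p0x; V = lc [([True,False,False,False,False,False,False], p1x), ([False,True,False,False,False,False,False], p2x), ([False,False,True,False,False,False,False], p3x), ([False,False,False,True,False,False,False], p4x), ([False,False,False,False,True,False,False], p5x), ([False,False,False,False,False,True,False], p6x), ([False,False,False,False,False,False,True], p7x)]; D = lc [([True,True,False,False,False,False,False], q12x), ([True,False,True,False,False,False,False], q13x), ([True,False,False,True,False,False,False], q14x), ([True,False,False,False,True,False,False], q15x),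 ([True,False,False,False,False,True,False], q16x), ([True,False,False,False,False,False,True], q17x), ([False,True,True,False,False,False,False], q23x), ([False,True,False,True,False,False,False], q24x), ([False,True,False,False,True,False,False], q25x), ([False,True,False,False,False,True,False], q26x), ([False,True,False,False,False,False,True], q27x), ([False,False,True,True,False,False,False], q34x), ([False,False,True,False,True,False,False], q35x), ([False,False,True,False,False,True,False], q36x), ([False,False,True,False,False,False,True], q37x), ([False,False,False,True,True,False,False], q45x), ([False,False,False,True,False,True,False], q46x), ([False,False,False,True,False,False,True], q47x), ([False,False,False,False,True,True,False], q56x), ([False,False,False,False,True,False,True], q57x), ([False,False,False,False,False,True,True], q67x)] in sc 16 (grade 6 X) = - (V \<odot> e7) + grade 6 (D \<odot> Wc \<odot> e7)"
  unfolding Let_def Iminus_lc Wc_lc e7_lc scal_lc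
  by (simp add: totv tv_eq_lc, (rule tv_eqI)?, (simp add: field_simps)?)

lemma F7:
  fixes p0x p1x p2x p3x p4x p5x p6x p7x q12x q13x q14x q15x q16x q17x q23x q24x q25x q26x q27x q34x q35x q36x q37x q45x q46x q47x q56x q57x q67x :: real
  shows "let X = lc [([False,False,False,False,False,False,False], p0x), ([True,False,False,False,False,False,False], (p1x + q23x + q45x - q67x)), ([False,True,False,False,False,False,False], (p2x - q13x + q46x + q57x)), ([False,False,True,False,False,False,False], (p3x + q12x + q47x - q56x)), ([False,False,False,True,False,False,False], (p4x - q15x - q26x - q37x)), ([False,False,False,False,True,False,False], (p5x + q14x - q27x + q36x)), ([False,False,False,False,False,True,False], (p6x + q17x + q24x - q35x)), ([False,False,False,False,False,False,True], (p7x - q16x + q25x + q34x))] \<odot> Iminus; S = p0x; V = lc [([True,False,False,False,False,False,False], p1x), ([False,True,False,False,False,False,False], p2x), ([False,False,True,False,False,False,False], p3x), ([False,False,False,True,False,False,False], p4x), ([False,False,False,False,True,False,False], p5x), ([False,False,False,False,False,True,False], p6x), ([False,False,False,False,False,False,True], p7x)]; D = lc [([True,True,False,False,False,False,False], q12x), ([True,False,True,False,False,False,False], q13x), ([True,False,False,True,False,False,False], q14x), ([True,False,False,False,True,False,False], q15x), ([True,False,False,False,False,True,False], q16x), ([True,False,False,False,False,False,True], q17x), ([False,True,True,False,False,False,False], q23x), ([False,True,False,True,False,False,False], q24x), ([False,True,False,False,True,False,False], q25x), ([False,True,False,False,False,True,False], q26x), ([False,True,False,False,False,False,True], q27x), ([False,False,True,True,False,False,False],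 q34x), ([False,False,True,False,True,False,False], q35x), ([False,False,True,False,False,True,False], q36x), ([False,False,True,False,False,False,True], q37x), ([False,False,False,True,True,False,False], q45x), ([False,False,False,True,False,True,False], q46x), ([False,False,False,True,False,False,True], q47x), ([False,False,False,False,True,True,False], q56x), ([False,False,False,False,True,False,True], q57x), ([False,False,False,False,False,True,True], q67x)] in sc 16 (grade 7 X) = - sc S e7"
  unfolding Let_def Iminus_lc Wc_lc e7_lc scal_lc
  by (simp add: totv tv_eq_lc, (rule tv_eqI)?, (simp add: field_simps)?)


lemma P_inst: "para a0 a \<odot> para b0 b = lc [([False,False,False,False,False,False,False], (a0 * b0 - (a 1 * b 1 + a 2 * b 2 + a 3 * b 3 + a 4 * b 4 + a 5 * b 5 + a 6 * b 6 + a 7 * b 7))), ([True,False,False,False,False,False,False], (a0 * b 1 + a 1 * b0)), ([False,True,False,False,False,False,False], (a0 * b 2 + a 2 * b0)), ([False,False,True,False,False,False,False], (a0 * b 3 + a 3 * b0)), ([False,False,False,True,False,False,False], (a0 * b 4 + a 4 * b0)), ([False,False,False,False,True,False,False], (a0 * b 5 + a 5 * b0)), ([False,False,False,False,False,True,False], (a0 * b 6 + a 6 * b0)), ([False,False,False,False,False,False,True], (a0 * b 7 + a 7 * b0)), ([True,True,False,False,False,False,False], (a 1 * b 2 - a 2 * b 1)), ([True,False,True,False,False,False,False], (a 1 * b 3 - a 3 * b 1)), ([True,False,False,True,False,False,False], (a 1 * b 4 - a 4 * b 1)), ([True,False,False,False,True,False,False], (a 1 * b 5 - a 5 * b 1)),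 ([True,False,False,False,False,True,False], (a 1 * b 6 - a 6 * b 1)), ([True,False,False,False,False,False,True], (a 1 * b 7 - a 7 * b 1)), ([False,True,True,False,False,False,False], (a 2 * b 3 - a 3 * b 2)), ([False,True,False,True,False,False,False], (a 2 * b 4 - a 4 * b 2)), ([False,True,False,False,True,False,False], (a 2 * b 5 - a 5 * b 2)), ([False,True,False,False,False,True,False], (a 2 * b 6 - a 6 * b 2)), ([False,True,False,False,False,False,True], (a 2 * b 7 - a 7 * b 2)), ([False,False,True,True,False,False,False], (a 3 * b 4 - a 4 * b 3)), ([False,False,True,False,True,False,False], (a 3 * b 5 - a 5 * b 3)), ([False,False,True,False,False,True,False], (a 3 * b 6 - a 6 * b 3)), ([False,False,True,False,False,False,True], (a 3 * b 7 - a 7 * b 3)), ([False,False,False,True,True,False,False], (a 4 * b 5 - a 5 * b 4)), ([False,False,False,True,False,True,False], (a 4 * b 6 - a 6 * b 4)), ([False,False,False,True,False,False,True], (a 4 * b 7 - a 7 * b 4)), ([False,False,False,False,True,True,False], (a 5 * b 6 - a 6 * b 5)), ([False,False,False,False,True,False,True], (a 5 * b 7 - a 7 * b 5)), ([False,False,False,False,False,True,True], (a 6 * b 7 - a 7 * b 6))]"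
  unfolding para_lc
  apply (simp add: lc_mult)
  apply (rule lc_eqI')
  apply simp
  apply simp
  apply (simp add: algebra_simps)
  done

lemma V_inst: "sc a0 (vec b) + sc b0 (vec a) = lc [([True,False,False,False,False,False,False], (a0 * b 1 + a 1 * b0)), ([False,True,False,False,False,False,False], (a0 * b 2 + a 2 * b0)), ([False,False,True,False,False,False,False], (a0 * b 3 + a 3 * b0)), ([False,False,False,True,False,False,False], (a0 * b 4 + a 4 * b0)), ([False,False,False,False,True,False,False], (a0 * b 5 + a 5 * b0)), ([False,False,False,False,False,True,False], (a0 * b 6 + a 6 * b0)), ([False,False,False,False,False,False,True], (a0 * b 7 + a 7 * b0))]"
  unfolding vec_lc
  apply (simp add: tolc)
  apply (rule lc_eqI')
  apply simp
  apply simp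
  apply (simp add: algebra_simps)
  done

lemma S_inst: "a0 * b0 - dotv a b = a0 * b0 - (a 1 * b 1 + a 2 * b 2 + a 3 * b 3 + a 4 * b 4 + a 5 * b 5 + a 6 * b 6 + a 7 * b 7)"
  by (simp add: dotv_eq)

theorem lemma5p1:
  fixes a0 b0 :: real and a b :: "nat \<Rightarrow> real"
  shows "let X = para a0 a \<odot> para b0 b \<odot> Iminus;
             S = a0 * b0 - dotv a b;
             V = sc a0 (vec b) + sc b0 (vec a);
             D = wedgev a b
         in sc 16 (grade 0 X) = scal S
          \<and> sc 16 (grade 1 X) = V - grade 1 (D \<odot> Wc)
          \<and> sc 16 (grade 2 X) = D - grade 2 (V \<odot> Wc) + grade 2 (D \<odot> Wc \<odot> e7)
          \<and> sc 16 (grade 3 X) = - sc S Wc + grade 3 (V \<odot> Wc \<odot> e7) - grade 3 (D \<odot> Wc)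
          \<and> sc 16 (grade 4 X) = sc S (Wc \<odot> e7) - grade 4 (V \<odot> Wc) + grade 4 (D \<odot> Wc \<odot> e7)
          \<and> sc 16 (grade 5 X) = grade 5 (V \<odot> Wc \<odot> e7) - grade 5 (D \<odot> Wc) - D \<odot> e7
          \<and> sc 16 (grade 6 X) = - (V \<odot> e7) + grade 6 (D \<odot> Wc \<odot> e7)
          \<and> sc 16 (grade 7 X) = - sc S e7
          \<and> (\<forall>k\<le>7. grade k X = 0 \<longleftrightarrow> grade (7 - k) X = 0)
          \<and> (grade 0 X = 0 \<longrightarrow>
               (\<forall>j\<in>{2..5}. \<forall>l\<in>{2..5}. grade j X = 0 \<longleftrightarrow> grade l X = 0))
          \<and> (grade 0 X = 0 \<and> grade 1 X = 0 \<and> grade 2 X = 0 \<longrightarrow> X = 0)"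
proof -
  note f0 = F0[where p0x = "a0 * b0 - (a 1 * b 1 + a 2 * b 2 + a 3 * b 3 + a 4 * b 4 + a 5 * b 5 + a 6 * b 6 + a 7 * b 7)" and p1x = "a0 * b 1 + a 1 * b0" and p2x = "a0 * b 2 + a 2 * b0" and p3x = "a0 * b 3 + a 3 * b0" and p4x = "a0 * b 4 + a 4 * b0" and p5x = "a0 * b 5 + a 5 * b0" and p6x = "a0 * b 6 + a 6 * b0" and p7x = "a0 * b 7 + a 7 * b0" and q12x = "a 1 * b 2 - a 2 * b 1" and q13x = "a 1 * b 3 - a 3 * b 1" and q14x = "a 1 * b 4 - a 4 * b 1" and q15x = "a 1 * b 5 - a 5 * b 1" and q16x = "a 1 * b 6 - a 6 * b 1" and q17x = "a 1 * b 7 - a 7 * b 1" and q23x = "a 2 * b 3 - a 3 * b 2" and q24x = "a 2 * b 4 - a 4 * b 2" and q25x = "a 2 * b 5 - a 5 * b 2" and q26x = "a 2 * b 6 - a 6 * b 2" and q27x = "a 2 * b 7 - a 7 * b 2" and q34x = "a 3 * b 4 - a 4 * b 3" and q35x = "a 3 * b 5 - a 5 * b 3" and q36x = "a 3 * b 6 - a 6 * b 3" and q37x = "a 3 * b 7 - a 7 * b 3" and q45x = "a 4 * b 5 - a 5 * b 4" and q46x = "a 4 * b 6 - a 6 * b 4" and q47x = "a 4 * b 7 - a 7 * b 4" and q56x = "a 5 * b 6 - a 6 * b 5" and q57x = "a 5 * b 7 - a 7 * b 5" and q67x = "a 6 * b 7 - a 7 * b 6", unfolded Let_def]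
  note f1 = F1[where p0x = "a0 * b0 - (a 1 * b 1 + a 2 * b 2 + a 3 * b 3 + a 4 * b 4 + a 5 * b 5 + a 6 * b 6 + a 7 * b 7)" and p1x = "a0 * b 1 + a 1 * b0" and p2x = "a0 * b 2 + a 2 * b0" and p3x = "a0 * b 3 + a 3 * b0" and p4x = "a0 * b 4 + a 4 * b0" and p5x = "a0 * b 5 + a 5 * b0" and p6x = "a0 * b 6 + a 6 * b0" and p7x = "a0 * b 7 + a 7 * b0" and q12x = "a 1 * b 2 - a 2 * b 1" and q13x = "a 1 * b 3 - a 3 * b 1" and q14x = "a 1 * b 4 - a 4 * b 1" and q15x = "a 1 * b 5 - a 5 * b 1" and q16x = "a 1 * b 6 - a 6 * b 1" and q17x = "a 1 * b 7 - a 7 * b 1" and q23x = "a 2 * b 3 - a 3 * b 2" and q24x = "a 2 * b 4 - a 4 * b 2" and q25x = "a 2 * b 5 - a 5 * b 2" and q26x = "a 2 * b 6 - a 6 * b 2" and q27x = "a 2 * b 7 - a 7 * b 2" and q34x = "a 3 * b 4 - a 4 * b 3" and q35x = "a 3 * b 5 - a 5 * b 3" and q36x = "a 3 * b 6 - a 6 * b 3" and q37x = "a 3 * b 7 - a 7 * b 3" and q45x = "a 4 * b 5 - a 5 * b 4" and q46x = "a 4 * b 6 - a 6 * b 4" and q47x = "a 4 * b 7 - a 7 * b 4" and q56x = "a 5 * b 6 - a 6 * b 5" and q57x = "a 5 * b 7 - a 7 * b 5" and q67x = "a 6 * b 7 - a 7 * b 6", unfolded Let_def]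
  note f2 = F2[where p0x = "a0 * b0 - (a 1 * b 1 + a 2 * b 2 + a 3 * b 3 + a 4 * b 4 + a 5 * b 5 + a 6 * b 6 + a 7 * b 7)" and p1x = "a0 * b 1 + a 1 * b0" and p2x = "a0 * b 2 + a 2 * b0" and p3x = "a0 * b 3 + a 3 * b0" and p4x = "a0 * b 4 + a 4 * b0" and p5x = "a0 * b 5 + a 5 * b0" and p6x = "a0 * b 6 + a 6 * b0" and p7x = "a0 * b 7 + a 7 * b0" and q12x = "a 1 * b 2 - a 2 * b 1" and q13x = "a 1 * b 3 - a 3 * b 1" and q14x = "a 1 * b 4 - a 4 * b 1" and q15x = "a 1 * b 5 - a 5 * b 1" and q16x = "a 1 * b 6 - a 6 * b 1" and q17x = "a 1 * b 7 - a 7 * b 1" and q23x = "a 2 * b 3 - a 3 * b 2" and q24x = "a 2 * b 4 - a 4 * b 2" and q25x = "a 2 * b 5 - a 5 * b 2" and q26x = "a 2 * b 6 - a 6 * b 2" and q27x = "a 2 * b 7 - a 7 * b 2" and q34x = "a 3 * b 4 - a 4 * b 3" and q35x = "a 3 * b 5 - a 5 * b 3" and q36x = "a 3 * b 6 - a 6 * b 3" and q37x = "a 3 * b 7 - a 7 * b 3" and q45x = "a 4 * b 5 - a 5 * b 4" and q46x = "a 4 * b 6 - a 6 * b 4" and q47x = "a 4 * b 7 - a 7 * b 4" and q56x = "a 5 * b 6 - a 6 * b 5" and q57x = "a 5 * b 7 - a 7 * b 5" and q67x = "a 6 * b 7 - a 7 * b 6", unfolded Let_def]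
  note f3 = F3[where p0x = "a0 * b0 - (a 1 * b 1 + a 2 * b 2 + a 3 * b 3 + a 4 * b 4 + a 5 * b 5 + a 6 * b 6 + a 7 * b 7)" and p1x = "a0 * b 1 + a 1 * b0" and p2x = "a0 * b 2 + a 2 * b0" and p3x = "a0 * b 3 + a 3 * b0" and p4x = "a0 * b 4 + a 4 * b0" and p5x = "a0 * b 5 + a 5 * b0" and p6x = "a0 * b 6 + a 6 * b0" and p7x = "a0 * b 7 + a 7 * b0" and q12x = "a 1 * b 2 - a 2 * b 1" and q13x = "a 1 * b 3 - a 3 * b 1" and q14x = "a 1 * b 4 - a 4 * b 1" and q15x = "a 1 * b 5 - a 5 * b 1" and q16x = "a 1 * b 6 - a 6 * b 1" and q17x = "a 1 * b 7 - a 7 * b 1" and q23x = "a 2 * b 3 - a 3 * b 2" and q24x = "a 2 * b 4 - a 4 * b 2" and q25x = "a 2 * b 5 - a 5 * b 2" and q26x = "a 2 * b 6 - a 6 * b 2" and q27x = "a 2 * b 7 - a 7 * b 2" and q34x = "a 3 * b 4 - a 4 * b 3" and q35x = "a 3 * b 5 - a 5 * b 3" and q36x = "a 3 * b 6 - a 6 * b 3" and q37x = "a 3 * b 7 - a 7 * b 3" and q45x = "a 4 * b 5 - a 5 * b 4" and q46x = "a 4 * b 6 - a 6 * b 4" and q47x = "a 4 * b 7 - a 7 * b 4" and q56x = "a 5 * b 6 - a 6 * b 5" and q57x = "a 5 * b 7 - a 7 * b 5" and q67x = "a 6 * b 7 - a 7 * b 6", unfolded Let_def]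
  note f4 = F4[where p0x = "a0 * b0 - (a 1 * b 1 + a 2 * b 2 + a 3 * b 3 + a 4 * b 4 + a 5 * b 5 + a 6 * b 6 + a 7 * b 7)" and p1x = "a0 * b 1 + a 1 * b0" and p2x = "a0 * b 2 + a 2 * b0" and p3x = "a0 * b 3 + a 3 * b0" and p4x = "a0 * b 4 + a 4 * b0" and p5x = "a0 * b 5 + a 5 * b0" and p6x = "a0 * b 6 + a 6 * b0" and p7x = "a0 * b 7 + a 7 * b0" and q12x = "a 1 * b 2 - a 2 * b 1" and q13x = "a 1 * b 3 - a 3 * b 1" and q14x = "a 1 * b 4 - a 4 * b 1" and q15x = "a 1 * b 5 - a 5 * b 1" and q16x = "a 1 * b 6 - a 6 * b 1" and q17x = "a 1 * b 7 - a 7 * b 1" and q23x = "a 2 * b 3 - a 3 * b 2" and q24x = "a 2 * b 4 - a 4 * b 2" and q25x = "a 2 * b 5 - a 5 * b 2" and q26x = "a 2 * b 6 - a 6 * b 2" and q27x = "a 2 * b 7 - a 7 * b 2" and q34x = "a 3 * b 4 - a 4 * b 3" and q35x = "a 3 * b 5 - a 5 * b 3" and q36x = "a 3 * b 6 - a 6 * b 3" and q37x = "a 3 * b 7 - a 7 * b 3" and q45x = "a 4 * b 5 - a 5 * b 4" and q46x = "a 4 * b 6 - a 6 * b 4" and q47x = "a 4 * b 7 - a 7 * b 4" and q56x = "a 5 * b 6 - a 6 * b 5" and q57x = "a 5 * b 7 - a 7 * b 5" and q67x = "a 6 * b 7 - a 7 * b 6", unfolded Let_def]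
  note f5 = F5[where p0x = "a0 * b0 - (a 1 * b 1 + a 2 * b 2 + a 3 * b 3 + a 4 * b 4 + a 5 * b 5 + a 6 * b 6 + a 7 * b 7)" and p1x = "a0 * b 1 + a 1 * b0" and p2x = "a0 * b 2 + a 2 * b0" and p3x = "a0 * b 3 + a 3 * b0" and p4x = "a0 * b 4 + a 4 * b0" and p5x = "a0 * b 5 + a 5 * b0" and p6x = "a0 * b 6 + a 6 * b0" and p7x = "a0 * b 7 + a 7 * b0" and q12x = "a 1 * b 2 - a 2 * b 1" and q13x = "a 1 * b 3 - a 3 * b 1" and q14x = "a 1 * b 4 - a 4 * b 1" and q15x = "a 1 * b 5 - a 5 * b 1" and q16x = "a 1 * b 6 - a 6 * b 1" and q17x = "a 1 * b 7 - a 7 * b 1" and q23x = "a 2 * b 3 - a 3 * b 2" and q24x = "a 2 * b 4 - a 4 * b 2" and q25x = "a 2 * b 5 - a 5 * b 2" and q26x = "a 2 * b 6 - a 6 * b 2" and q27x = "a 2 * b 7 - a 7 * b 2" and q34x = "a 3 * b 4 - a 4 * b 3" and q35x = "a 3 * b 5 - a 5 * b 3" and q36x = "a 3 * b 6 - a 6 * b 3" and q37x = "a 3 * b 7 - a 7 * b 3" and q45x = "a 4 * b 5 - a 5 * b 4" and q46x = "a 4 * b 6 - a 6 * b 4" and q47x = "a 4 * b 7 - a 7 * b 4" and q56x = "a 5 * b 6 - a 6 * b 5" and q57x = "a 5 * b 7 - a 7 * b 5" and q67x = "a 6 * b 7 - a 7 * b 6", unfolded Let_def]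
  note f6 = F6[where p0x = "a0 * b0 - (a 1 * b 1 + a 2 * b 2 + a 3 * b 3 + a 4 * b 4 + a 5 * b 5 + a 6 * b 6 + a 7 * b 7)" and p1x = "a0 * b 1 + a 1 * b0" and p2x = "a0 * b 2 + a 2 * b0" and p3x = "a0 * b 3 + a 3 * b0" and p4x = "a0 * b 4 + a 4 * b0" and p5x = "a0 * b 5 + a 5 * b0" and p6x = "a0 * b 6 + a 6 * b0" and p7x = "a0 * b 7 + a 7 * b0" and q12x = "a 1 * b 2 - a 2 * b 1" and q13x = "a 1 * b 3 - a 3 * b 1" and q14x = "a 1 * b 4 - a 4 * b 1" and q15x = "a 1 * b 5 - a 5 * b 1" and q16x = "a 1 * b 6 - a 6 * b 1" and q17x = "a 1 * b 7 - a 7 * b 1" and q23x = "a 2 * b 3 - a 3 * b 2" and q24x = "a 2 * b 4 - a 4 * b 2" and q25x = "a 2 * b 5 - a 5 * b 2" and q26x = "a 2 * b 6 - a 6 * b 2" and q27x = "a 2 * b 7 - a 7 * b 2" and q34x = "a 3 * b 4 - a 4 * b 3" and q35x = "a 3 * b 5 - a 5 * b 3" and q36x = "a 3 * b 6 - a 6 * b 3" and q37x = "a 3 * b 7 - a 7 * b 3" and q45x = "a 4 * b 5 - a 5 * b 4" and q46x = "a 4 * b 6 - a 6 * b 4" and q47x = "a 4 * b 7 - a 7 * b 4" and q56x = "a 5 * b 6 - a 6 * b 5" and q57x = "a 5 * b 7 - a 7 * b 5" and q67x = "a 6 * b 7 - a 7 * b 6", unfolded Let_def]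
  note f7 = F7[where p0x = "a0 * b0 - (a 1 * b 1 + a 2 * b 2 + a 3 * b 3 + a 4 * b 4 + a 5 * b 5 + a 6 * b 6 + a 7 * b 7)" and p1x = "a0 * b 1 + a 1 * b0" and p2x = "a0 * b 2 + a 2 * b0" and p3x = "a0 * b 3 + a 3 * b0" and p4x = "a0 * b 4 + a 4 * b0" and p5x = "a0 * b 5 + a 5 * b0" and p6x = "a0 * b 6 + a 6 * b0" and p7x = "a0 * b 7 + a 7 * b0" and q12x = "a 1 * b 2 - a 2 * b 1" and q13x = "a 1 * b 3 - a 3 * b 1" and q14x = "a 1 * b 4 - a 4 * b 1" and q15x = "a 1 * b 5 - a 5 * b 1" and q16x = "a 1 * b 6 - a 6 * b 1" and q17x = "a 1 * b 7 - a 7 * b 1" and q23x = "a 2 * b 3 - a 3 * b 2" and q24x = "a 2 * b 4 - a 4 * b 2" and q25x = "a 2 * b 5 - a 5 * b 2" and q26x = "a 2 * b 6 - a 6 * b 2" and q27x = "a 2 * b 7 - a 7 * b 2" and q34x = "a 3 * b 4 - a 4 * b 3" and q35x = "a 3 * b 5 - a 5 * b 3" and q36x = "a 3 * b 6 - a 6 * b 3" and q37x = "a 3 * b 7 - a 7 * b 3" and q45x = "a 4 * b 5 - a 5 * b 4" and q46x = "a 4 * b 6 - a 6 * b 4" and q47x = "a 4 * b 7 - a 7 * b 4" and q56x = "a 5 * b 6 - a 6 * b 5" and q57x = "a 5 * b 7 - a 7 * b 5" and q67x = "a 6 * b 7 - a 7 * b 6", unfolded Let_def]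
  note l2 = L2[where s = "a0 * b0 - (a 1 * b 1 + a 2 * b 2 + a 3 * b 3 + a 4 * b 4 + a 5 * b 5 + a 6 * b 6 + a 7 * b 7)" and v1x = "((a0 * b 1 + a 1 * b0) + (a 2 * b 3 - a 3 * b 2) + (a 4 * b 5 - a 5 * b 4) - (a 6 * b 7 - a 7 * b 6))" and v2x = "((a0 * b 2 + a 2 * b0) - (a 1 * b 3 - a 3 * b 1) + (a 4 * b 6 - a 6 * b 4) + (a 5 * b 7 - a 7 * b 5))" and v3x = "((a0 * b 3 + a 3 * b0) + (a 1 * b 2 - a 2 * b 1) + (a 4 * b 7 - a 7 * b 4) - (a 5 * b 6 - a 6 * b 5))" and v4x = "((a0 * b 4 + a 4 * b0) - (a 1 * b 5 - a 5 * b 1) - (a 2 * b 6 - a 6 * b 2) - (a 3 * b 7 - a 7 * b 3))" and v5x = "((a0 * b 5 + a 5 * b0) + (a 1 * b 4 - a 4 * b 1) - (a 2 * b 7 - a 7 * b 2) + (a 3 * b 6 - a 6 * b 3))" and v6x = "((a0 * b 6 + a 6 * b0) + (a 1 * b 7 - a 7 * b 1) + (a 2 * b 4 - a 4 * b 2) - (a 3 * b 5 - a 5 * b 3))" and v7x = "((a0 * b 7 + a 7 * b0) - (a 1 * b 6 - a 6 * b 1) + (a 2 * b 5 - a 5 * b 2) + (a 3 * b 4 - a 4 * b 3))", unfolded Let_def]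
  note l1 = L1[where p0x = "a0 * b0 - (a 1 * b 1 + a 2 * b 2 + a 3 * b 3 + a 4 * b 4 + a 5 * b 5 + a 6 * b 6 + a 7 * b 7)" and p1x = "a0 * b 1 + a 1 * b0" and p2x = "a0 * b 2 + a 2 * b0" and p3x = "a0 * b 3 + a 3 * b0" and p4x = "a0 * b 4 + a 4 * b0" and p5x = "a0 * b 5 + a 5 * b0" and p6x = "a0 * b 6 + a 6 * b0" and p7x = "a0 * b 7 + a 7 * b0" and q12x = "a 1 * b 2 - a 2 * b 1" and q13x = "a 1 * b 3 - a 3 * b 1" and q14x = "a 1 * b 4 - a 4 * b 1" and q15x = "a 1 * b 5 - a 5 * b 1" and q16x = "a 1 * b 6 - a 6 * b 1" and q17x = "a 1 * b 7 - a 7 * b 1" and q23x = "a 2 * b 3 - a 3 * b 2" and q24x = "a 2 * b 4 - a 4 * b 2" and q25x = "a 2 * b 5 - a 5 * b 2" and q26x = "a 2 * b 6 - a 6 * b 2" and q27x = "a 2 * b 7 - a 7 * b 2" and q34x = "a 3 * b 4 - a 4 * b 3" and q35x = "a 3 * b 5 - a 5 * b 3" and q36x = "a 3 * b 6 - a 6 * b 3" and q37x = "a 3 * b 7 - a 7 * b 3" and q45x = "a 4 * b 5 - a 5 * b 4" and q46x = "a 4 * b 6 - a 6 * b 4" and q47x = "a 4 * b 7 - a 7 * b 4" and q56x = "a 5 * b 6 - a 6 * b 5" and q57x = "a 5 * b 7 - a 7 * b 5" and q67x = "a 6 * b 7 - a 7 * b 6"]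
  show ?thesis unfolding Let_def P_inst l1 S_inst V_inst wedgev_lc
    using f0 f1 f2 f3 f4 f5 f6 f7 l2 by blast
qed

end
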